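(* In the linear mixture MDP setting with Algorithm 1 as described in the context, with probability at least $1-\delta$, $\tilde V_h^*(s,R_k)\le V_{k,h}(s)$ holds for all $s\in\mathcal{S}$, $h\in[H]$ and $k\in[K]$, where $R_k=\{R_{k,h}\}_h$ is the exploration-driven reward of episode $k$.
   Context: Episodic MDP with state set $\mathcal{S}$, action set $\mathcal{A}$, horizon $H$, transitions $P_h(\cdot|s,a)$, fixed initial state $s_1$. For a nonnegative reward $R=\{R_h\}$ define $\tilde V^*_{H+1}(\cdot,R)=0$ and $\tilde V^*_h(s,R)=\max_{a}\min\{R_h(s,a)+\sum_{s'}P_h(s'|s,a)\tilde V^*_{h+1}(s',R),H\}$. Linear mixture MDP: known $\phi:\mathcal{S}\times\mathcal{A}\times\mathcal{S}\to\mathbb{R}^d$ with $\|\sum_{s'}\phi(s,a,s')V(s')\|_2\le1$ for all $V:\mathcal{S}\to[0,1]$, and unknown $\theta_h$, $\|\theta_h\|_2\le B$, with $P_h(s'|s,a)=\theta_h^\top\phi(s,a,s')$. $\|x\|_M=\sqrt{x^\top Mx}$. Algorithm 1 (run for $K$ episodes, with failure probability $\delta$): $\lambda=B^{-2}$, $\beta=H\sqrt{d\log(4H^3K\lambda^{-1}\delta^{-1})}+\sqrt\lambda B$, $\mathcal{V}=\{V:\mathcal{S}\to[0,H]\}$. For $k=1,\dots,K$: $V_{k,H+1}\equiv0$; for $h=H,\dots,1$: $\Lambda_{k,h}=\sum_{t<k}\phi_{t,h}(s_{t,h},a_{t,h})\phi_{t,h}(s_{t,h},a_{t,h})^\top+\lambda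 I$; $\hat\theta_{k,h}=\Lambda_{k,h}^{-1}\sum_{t<k}\phi_{t,h}(s_{t,h},a_{t,h})\tilde V_{t,h+1,s_{t,h},a_{t,h}}(s_{t,h+1})$; $\tilde V_{k,h+1,s,a}\in\arg\max_{V\in\mathcal{V}}\|\sum_{s'}\phi(s,a,s')V(s')\|_{\Lambda_{k,h}^{-1}}$; $\phi_{k,h}(s,a)=\sum_{s'}\phi(s,a,s')\tilde V_{k,h+1,s,a}(s')$; $u_{k,h}(s,a)=\beta\|\phi_{k,h}(s,a)\|_{\Lambda_{k,h}^{-1}}$; $R_{k,h}=u_{k,h}$; $Q_{k,h}(s,a)=\min\{\hat\theta_{k,h}^\top\sum_{s'}\phi(s,a,s')V_{k,h+1}(s')+R_{k,h}(s,a)+u_{k,h}(s,a),H\}$; $V_{k,h}(s)=\max_aQ_{k,h}(s,a)$, $\pi_{k,h}(s)\in\arg\max_aQ_{k,h}(s,a)$. Then $\pi_k$ is executed from $s_1$, producing $s_{k,h+1}\sim P_h(\cdot|s_{k,h},a_{k,h})$, $a_{k,h}=\pi_{k,h}(s_{k,h})$. *)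

theory Defs
  imports "HOL-Analysis.Analysis" "HOL-Probability.Probability"
begin

text \<open>Episodes: an episode is a list of length H+1 of state/action pairs; its
(h-1)-th entry (0-based) is (s_h, a_h), h = 1..H+1 (the action at step H+1 is unused).
Episodes of the run are indexed by t = 1,2,...\<close>

type_synonym ('s,'a) episode = "('s \<times> 'a) list"

definition st :: "(nat \<Rightarrow> ('s,'a) episode) \<Rightarrow> nat \<Rightarrow> nat \<Rightarrow> 's" where
  "st ep t h = fst (ep t ! (h - 1))"

definition act :: "(nat \<Rightarrow> ('s,'a) episode) \<Rightarrow> nat \<Rightarrow> nat \<Rightarrow> 'a" where
  "act ep t h = snd (ep t ! (h - 1))"

definition phiV :: "('s::finite \<Rightarrow> 'a \<Rightarrow> 's \<Rightarrow> real^'d) \<Rightarrow> 's \<Rightarrow> 'a \<Rightarrow> ('s \<Rightarrow> real) \<Rightarrow> real^'d" where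
  "phiV \<phi> s a V = (\<Sum>s'\<in>UNIV. V s' *\<^sub>R \<phi> s a s')"

definition wnorm :: "real^'d^'d \<Rightarrow> real^'d \<Rightarrow> real" where
  "wnorm M x = sqrt (x \<bullet> (M *v x))"

definition outer :: "real^'d \<Rightarrow> real^'d^'d" where
  "outer x = (\<chi> i j. x $ i * x $ j)"

definition Vset :: "nat \<Rightarrow> ('s \<Rightarrow> real) set" where
  "Vset H = {V. \<forall>x. 0 \<le> V x \<and> V x \<le> real H}"

text \<open>Algorithm 1. The tie-breaking rules are parameters:
 sel k h M s a is the chosen maximiser tilde V_{k,h+1,s,a} given Lambda_{k,h} = M,
 pick k h s f is the chosen maximising action of f = Q_{k,h}(s,.).
 LamA ep n h = Lambda_{n+1,h}.\<close>

primrec LamA ::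
  "('s::finite \<Rightarrow> 'a \<Rightarrow> 's \<Rightarrow> real^'d) \<Rightarrow> real
   \<Rightarrow> (nat \<Rightarrow> nat \<Rightarrow> real^'d^'d \<Rightarrow> 's \<Rightarrow> 'a \<Rightarrow> ('s \<Rightarrow> real))
   \<Rightarrow> (nat \<Rightarrow> ('s,'a) episode) \<Rightarrow> nat \<Rightarrow> nat \<Rightarrow> real^'d^'d" where
  "LamA \<phi> lam sel ep 0 h = lam *\<^sub>R mat 1"
| "LamA \<phi> lam sel ep (Suc n) h =
     LamA \<phi> lam sel ep n h
     + outer (phiV \<phi> (st ep (Suc n) h) (act ep (Suc n) h)
                (sel (Suc n) h (LamA \<phi> lam sel ep n h) (st ep (Suc n) h) (act ep (Suc n) h)))"

definition Lam where
  "Lam \<phi> lam sel ep k h = LamA \<phi> lam sel ep (k - 1) h"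

definition tV where
  "tV \<phi> lam sel ep k h s a = sel k h (Lam \<phi> lam sel ep k h) s a"

definition phik where
  "phik \<phi> lam sel ep k h s a = phiV \<phi> s a (tV \<phi> lam sel ep k h s a)"

definition thetahat where
  "thetahat \<phi> lam sel ep k h =
     matrix_inv (Lam \<phi> lam sel ep k h) *v
       (\<Sum>t\<in>{1..<k}. tV \<phi> lam sel ep t h (st ep t h) (act ep t h) (st ep t (Suc h))
                        *\<^sub>R phik \<phi> lam sel ep t h (st ep t h) (act ep t h))"

definition bonus where
  "bonus \<phi> lam beta sel ep k h s a =
     beta * wnorm (matrix_inv (Lam \<phi> lam sel ep k h)) (phik \<phi> lam sel ep k h s a)"

definition Rk where
  "Rk \<phi> lam beta sel ep k = (\<lambda>h s a. bonus \<phi> lam beta sel ep k h s a)"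

text \<open>VA n h s = V_{k,h}(s) where n = H+1-h steps remain (V_{k,H+1} = 0).\<close>
primrec VA ::
  "('s::finite \<Rightarrow> 'a::finite \<Rightarrow> 's \<Rightarrow> real^'d) \<Rightarrow> nat \<Rightarrow> real \<Rightarrow> real
   \<Rightarrow> (nat \<Rightarrow> nat \<Rightarrow> real^'d^'d \<Rightarrow> 's \<Rightarrow> 'a \<Rightarrow> ('s \<Rightarrow> real))
   \<Rightarrow> (nat \<Rightarrow> ('s,'a) episode) \<Rightarrow> nat \<Rightarrow> nat \<Rightarrow> nat \<Rightarrow> 's \<Rightarrow> real" where
  "VA \<phi> H lam beta sel ep k 0 h s = 0"
| "VA \<phi> H lam beta sel ep k (Suc n) h s =
     Max (range (\<lambda>a. min (thetahat \<phi> lam sel ep k h \<bullet> phiV \<phi> s a (VA \<phi> H lam beta sel ep k n (Suc h))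
                           + Rk \<phi> lam beta sel ep k h s a + bonus \<phi> lam beta sel ep k h s a)
                          (real H)))"

definition Valg where
  "Valg \<phi> H lam beta sel ep k h s = VA \<phi> H lam beta sel ep k (H + 1 - h) h s"

definition Qalg where
  "Qalg \<phi> H lam beta sel ep k h s a =
     min (thetahat \<phi> lam sel ep k h \<bullet> phiV \<phi> s a (Valg \<phi> H lam beta sel ep k (Suc h))
          + Rk \<phi> lam beta sel ep k h s a + bonus \<phi> lam beta sel ep k h s a) (real H)"

definition polk where
  "polk \<phi> H lam beta sel pick ep k h s = pick k h s (\<lambda>a. Qalg \<phi> H lam beta sel ep k h s a)"

primrec roll :: "(nat \<Rightarrow> 's \<Rightarrow> 'a) \<Rightarrow> (nat \<Rightarrow> 's \<Rightarrow> 'a \<Rightarrow> 's pmf) \<Rightarrow> nat \<Rightarrow> nat \<Rightarrow> 's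
                  \<Rightarrow> ('s,'a) episode pmf" where
  "roll pol P h 0 s = return_pmf [(s, pol h s)]"
| "roll pol P h (Suc n) s =
     bind_pmf (P h s (pol h s)) (\<lambda>s'.
     bind_pmf (roll pol P (Suc h) n s') (\<lambda>rest. return_pmf ((s, pol h s) # rest)))"

definition hist_fn :: "('s,'a) episode list \<Rightarrow> nat \<Rightarrow> ('s,'a) episode" where
  "hist_fn hs t = hs ! (t - 1)"

primrec histp ::
  "('s::finite \<Rightarrow> 'a::finite \<Rightarrow> 's \<Rightarrow> real^'d) \<Rightarrow> (nat \<Rightarrow> 's \<Rightarrow> 'a \<Rightarrow> 's pmf) \<Rightarrow> 's \<Rightarrow> nat
   \<Rightarrow> real \<Rightarrow> real
   \<Rightarrow> (nat \<Rightarrow> nat \<Rightarrow> real^'d^'d \<Rightarrow> 's \<Rightarrow> 'a \<Rightarrow> ('s \<Rightarrow> real))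
   \<Rightarrow> (nat \<Rightarrow> nat \<Rightarrow> 's \<Rightarrow> ('a \<Rightarrow> real) \<Rightarrow> 'a)
   \<Rightarrow> nat \<Rightarrow> ('s,'a) episode list pmf" where
  "histp \<phi> P s1 H lam beta sel pick 0 = return_pmf []"
| "histp \<phi> P s1 H lam beta sel pick (Suc n) =
     bind_pmf (histp \<phi> P s1 H lam beta sel pick n) (\<lambda>hs.
     bind_pmf (roll (polk \<phi> H lam beta sel pick (hist_fn hs) (Suc n)) P 1 H s1) (\<lambda>e.
     return_pmf (hs @ [e])))"

text \<open>tilde V^*_h(s,R) with truncation at H; VsA n h s with n = H+1-h remaining steps.\<close>
primrec VsA :: "(nat \<Rightarrow> 's::finite \<Rightarrow> 'a::finite \<Rightarrow> 's pmf) \<Rightarrow> nat \<Rightarrow> (nat \<Rightarrow> 's \<Rightarrow> 'a \<Rightarrow> real)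
                 \<Rightarrow> nat \<Rightarrow> nat \<Rightarrow> 's \<Rightarrow> real" where
  "VsA P H R 0 h s = 0"
| "VsA P H R (Suc n) h s =
     Max (range (\<lambda>a. min (R h s a + (\<Sum>s'\<in>UNIV. pmf (P h s a) s' * VsA P H R n (Suc h) s'))
                          (real H)))"

definition Vstar :: "(nat \<Rightarrow> 's::finite \<Rightarrow> 'a::finite \<Rightarrow> 's pmf) \<Rightarrow> nat \<Rightarrow> (nat \<Rightarrow> 's \<Rightarrow> 'a \<Rightarrow> real)
                 \<Rightarrow> nat \<Rightarrow> 's \<Rightarrow> real" where
  "Vstar P H R h s = VsA P H R (H + 1 - h) h s"

end

theory Submission
  imports Defs
begin

lemma outer_mult: "outer u *v y = (u \<bullet> y) *\<^sub>R (u::real^'d)"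
  by (simp add: outer_def matrix_vector_mult_def vec_eq_iff inner_vec_def sum_distrib_left mult.commute mult.left_commute)

lemma scaled_id_mult: "(c *\<^sub>R mat 1) *v (y::real^'d) = c *\<^sub>R y"
proof -
  have "\<And>i. (\<Sum>j\<in>UNIV. c * (if i = j then 1 else 0) * y $ j) = c * y $ i"
  proof -
    fix i
    have "\<And>j. c * (if i = j then 1 else 0) * y $ j = (if i = j then c * y $ j else 0)" by simp
    then show "(\<Sum>j\<in>UNIV. c * (if i = j then 1 else 0) * y $ j) = c * y $ i"
      by simp
  qed
  then show ?thesis
    by (simp add: matrix_vector_mult_def vec_eq_iff mat_def)
qed

locale gram =
  fixes L :: "real^'d^'d" and lam :: real and f :: "nat \<Rightarrow> real^'d" and T :: "nat set"
  assumes fin: "finite T" and lam_pos: "lam > 0"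
    and Lmul: "\<And>y. L *v y = lam *\<^sub>R y + (\<Sum>t\<in>T. (f t \<bullet> y) *\<^sub>R f t)"
begin

definition G where "G x y = lam * (x \<bullet> y) + (\<Sum>t\<in>T. (f t \<bullet> x) * (f t \<bullet> y))"

lemma G_eq: "x \<bullet> (L *v y) = G x y"
  by (simp add: Lmul G_def inner_add_right inner_sum_right mult.commute inner_commute)

lemma G_sym: "G x y = G y x"
  by (simp add: G_def inner_commute mult.commute)

lemma G_ge: "G x x \<ge> lam * (x \<bullet> x)"
  unfolding G_def by (auto intro!: sum_nonneg)

lemma G_nonneg: "G x x \<ge> 0"
  using G_ge[of x] lam_pos by (smt (verit) inner_ge_zero mult_nonneg_nonneg)

lemma G_add_left: "G (a + b) y = G a y + G b y"
  by (simp add: G_def inner_add_right algebra_simps sum.distrib)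
lemma G_scale_left: "G (c *\<^sub>R a) y = c * G a y"
  by (simp add: G_def algebra_simps sum_distrib_left)
lemma G_diff_left: "G (a - b) y = G a y - G b y"
  by (simp add: G_def inner_diff_right algebra_simps sum_subtractf)
lemma G_add_right: "G y (a + b) = G y a + G y b"
  using G_add_left G_sym by metis
lemma G_scale_right: "G y (c *\<^sub>R a) = c * G y a"
  using G_scale_left G_sym by metis
lemma G_diff_right: "G y (a - b) = G y a - G y b"
  using G_diff_left G_sym by metis

lemma G_CS: "(G a b)\<^sup>2 \<le> G a a * G b b"
proof -
  have q: "0 \<le> G a a - 2 * t * G a b + t\<^sup>2 * G b b" for t
  proof -
    have "0 \<le> G (a - t *\<^sub>R b) (a - t *\<^sub>R b)" by (rule G_nonneg)
    also have "\<dots> = G a a - 2 * t * G a b + t\<^sup>2 * G b b"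
      by (simp add: G_diff_left G_diff_right G_scale_left G_scale_right G_sym[of b a] power2_eq_square algebra_simps)
    finally show ?thesis .
  qed
  show ?thesis
  proof (cases "G b b = 0")
    case True
    have "G a b = 0"
    proof (rule ccontr)
      assume ne: "G a b \<noteq> 0"
      have "0 \<le> G a a - 2 * ((G a a + 1) / (2 * G a b)) * G a b"
        using q[of "(G a a + 1) / (2 * G a b)"] True by simp
      also have "\<dots> = -1" using ne by (simp add: field_simps)
      finally show False by simp
    qed
    then show ?thesis using True by simp
  next
    case False
    then have pos: "G b b > 0" using G_nonneg[of b] by simp
    have "0 \<le> G a a - 2 * (G a b / G b b) * G a b + (G a b / G b b)\<^sup>2 * G b b"
      by (rule q)
    also have "\<dots> = G a a - (G a b)\<^sup>2 / G b b"
      using pos by (simp add: field_simps power2_eq_square)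
    finally show ?thesis using pos by (simp add: field_simps)
  qed
qed

lemma G_CS_abs: "\<bar>G a b\<bar> \<le> sqrt (G a a) * sqrt (G b b)"
proof -
  have "\<bar>G a b\<bar> = sqrt ((G a b)\<^sup>2)" by simp
  also have "\<dots> \<le> sqrt (G a a * G b b)" using G_CS by (rule real_sqrt_le_mono)
  finally show ?thesis by (simp add: real_sqrt_mult)
qed

lemma L_inj: "L *v x = 0 \<Longrightarrow> x = 0"
proof -
  assume "L *v x = 0"
  then have "G x x = 0" using G_eq[of x x] by simp
  then have "lam * (x \<bullet> x) \<le> 0" using G_ge[of x] by simp
  then have "x \<bullet> x \<le> 0" using lam_pos by (simp add: mult_le_0_iff)
  then show "x = 0" by (metis inner_eq_zero_iff inner_ge_zero order_antisym)
qed

lemma L_invertible: "invertible L"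
  using L_inj matrix_left_invertible_ker invertible_left_inverse by blast

lemma L_inv_right: "L ** matrix_inv L = mat 1" and L_inv_left: "matrix_inv L ** L = mat 1"
proof -
  have "\<exists>A'. L ** A' = mat 1 \<and> A' ** L = mat 1" using L_invertible by (simp add: invertible_def)
  then have "L ** matrix_inv L = mat 1 \<and> matrix_inv L ** L = mat 1"
    unfolding matrix_inv_def by (rule someI_ex)
  then show "L ** matrix_inv L = mat 1" "matrix_inv L ** L = mat 1" by auto
qed

lemma L_inv_v: "L *v (matrix_inv L *v w) = w"
  by (simp add: matrix_vector_mul_assoc L_inv_right)
lemma L_inv_v': "matrix_inv L *v (L *v w) = w"
  by (simp add: matrix_vector_mul_assoc L_inv_left)


lemma inv_quad: "w \<bullet> (matrix_inv L *v w) = G (matrix_inv L *v w) (matrix_inv L *v w)"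
proof -
  have "w \<bullet> (matrix_inv L *v w) = (matrix_inv L *v w) \<bullet> (L *v (matrix_inv L *v w))"
    by (simp add: L_inv_v inner_commute)
  then show ?thesis by (simp add: G_eq)
qed

lemma inv_bil: "(matrix_inv L *v w) \<bullet> v = G (matrix_inv L *v w) (matrix_inv L *v v)"
proof -
  have "(matrix_inv L *v w) \<bullet> v = (matrix_inv L *v w) \<bullet> (L *v (matrix_inv L *v v))"
    by (simp add: L_inv_v)
  then show ?thesis by (simp add: G_eq)
qed

lemma inv_CS: "\<bar>(matrix_inv L *v w) \<bullet> v\<bar> \<le> wnorm (matrix_inv L) w * wnorm (matrix_inv L) v"
  unfolding wnorm_def inv_quad[of w] inv_quad[of v] inv_bil by (rule G_CS_abs)

lemma Q_le:
  assumes S: "S = (\<Sum>t\<in>T. \<eta> t *\<^sub>R f t)"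
  shows "G (matrix_inv L *v S) (matrix_inv L *v S) \<le> (\<Sum>t\<in>T. (\<eta> t)\<^sup>2)"
proof -
  define a where "a = matrix_inv L *v S"
  define Q where "Q = G a a"
  define E where "E = (\<Sum>t\<in>T. (\<eta> t)\<^sup>2)"
  have Qa: "Q = a \<bullet> S" unfolding Q_def a_def using inv_quad[of S] by (simp add: inner_commute)
  also have "\<dots> = (\<Sum>t\<in>T. \<eta> t * (f t \<bullet> a))"
    by (simp add: S inner_sum_right inner_commute)
  finally have Qs: "Q = (\<Sum>t\<in>T. \<eta> t * (f t \<bullet> a))" .
  have W: "(\<Sum>t\<in>T. (f t \<bullet> a)\<^sup>2) \<le> Q"
  proof -
    have "(\<Sum>t\<in>T. (f t \<bullet> a)\<^sup>2) \<le> lam * (a \<bullet> a) + (\<Sum>t\<in>T. (f t \<bullet> a)\<^sup>2)"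
      using lam_pos by simp
    also have "\<dots> = Q" by (simp add: Q_def G_def power2_eq_square)
    finally show ?thesis .
  qed
  have "Q\<^sup>2 \<le> E * (\<Sum>t\<in>T. (f t \<bullet> a)\<^sup>2)"
    unfolding Qs E_def by (rule Cauchy_Schwarz_ineq_sum)
  also have "\<dots> \<le> E * Q"
    using W by (intro mult_left_mono) (auto simp: E_def intro!: sum_nonneg)
  finally have "Q\<^sup>2 \<le> E * Q" .
  moreover have "Q \<ge> 0" unfolding Q_def by (rule G_nonneg)
  moreover have "E \<ge> 0" unfolding E_def by (auto intro!: sum_nonneg)
  ultimately have "Q \<le> E"
    by (cases "Q = 0") (auto simp: power2_eq_square)
  then show ?thesis unfolding Q_def a_def E_def .
qed

lemma norm_le_G: "lam * (norm x)\<^sup>2 \<le> G x x"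
  using G_ge[of x] by (simp add: power2_norm_eq_inner)

lemma theta_part: "lam\<^sup>2 * G (matrix_inv L *v th) (matrix_inv L *v th) \<le> lam * (norm th)\<^sup>2"
proof -
  define a where "a = matrix_inv L *v th"
  have Ga: "G a a = a \<bullet> th" unfolding a_def using inv_quad[of th] by (simp add: inner_commute)
  have "lam * (norm a)\<^sup>2 \<le> norm a * norm th"
    using norm_le_G[of a] Ga norm_cauchy_schwarz[of a th] by linarith
  then have na: "lam * norm a \<le> norm th"
    by (cases "norm a = 0") (auto simp: power2_eq_square)
  have "lam\<^sup>2 * G a a \<le> lam\<^sup>2 * (norm a * norm th)"
    using Ga norm_cauchy_schwarz[of a th] by (intro mult_left_mono) auto
  also have "\<dots> = lam * (lam * norm a) * norm th" by (simp add: power2_eq_square)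
  also have "\<dots> \<le> lam * norm th * norm th"
    using na lam_pos by (intro mult_right_mono) auto
  finally show ?thesis unfolding a_def by (simp add: power2_eq_square)
qed

lemma value_lower:
  assumes Hp: "(Hr::real) > 0"
    and S: "S = (\<Sum>t\<in>T. \<eta> t *\<^sub>R f t)"
    and x: "x = (4 / Hr\<^sup>2) *\<^sub>R (matrix_inv L *v S) + e"
  shows "(\<Sum>t\<in>T. (x \<bullet> f t) * \<eta> t - Hr\<^sup>2 / 8 * (x \<bullet> f t)\<^sup>2)
         \<ge> 2 * G (matrix_inv L *v S) (matrix_inv L *v S) / Hr\<^sup>2 - Hr\<^sup>2 / 8 * G e e"
proof -
  define a where "a = matrix_inv L *v S"
  define c where "c = 4 / Hr\<^sup>2"
  define Q where "Q = G a a"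
  have xS: "x \<bullet> S = G x a"
    unfolding a_def using G_eq[of x "matrix_inv L *v S"] by (simp add: L_inv_v)
  have sum1: "(\<Sum>t\<in>T. (x \<bullet> f t) * \<eta> t) = x \<bullet> S"
    by (simp add: S inner_sum_right mult.commute)
  have sum2: "(\<Sum>t\<in>T. (x \<bullet> f t)\<^sup>2) \<le> G x x"
  proof -
    have "(\<Sum>t\<in>T. (x \<bullet> f t)\<^sup>2) \<le> lam * (x \<bullet> x) + (\<Sum>t\<in>T. (x \<bullet> f t)\<^sup>2)"
      using lam_pos by simp
    also have "\<dots> = G x x" by (simp add: G_def power2_eq_square inner_commute)
    finally show ?thesis .
  qed
  have xa: "G x a = c * Q + G e a"
    by (simp add: x a_def c_def Q_def G_add_left G_scale_left)
  have xx: "G x x = c * c * Q + 2 * c * G e a + G e e"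
    by (simp add: x a_def c_def Q_def G_add_left G_add_right G_scale_left G_scale_right G_sym[of "matrix_inv L *v S" e] algebra_simps)
  have "(\<Sum>t\<in>T. (x \<bullet> f t) * \<eta> t - Hr\<^sup>2 / 8 * (x \<bullet> f t)\<^sup>2)
        = x \<bullet> S - Hr\<^sup>2 / 8 * (\<Sum>t\<in>T. (x \<bullet> f t)\<^sup>2)"
    by (simp add: sum_subtractf sum1 sum_distrib_left)
  also have "\<dots> \<ge> x \<bullet> S - Hr\<^sup>2 / 8 * G x x"
    using sum2 by (simp add: mult_left_mono)
  finally have "(\<Sum>t\<in>T. (x \<bullet> f t) * \<eta> t - Hr\<^sup>2 / 8 * (x \<bullet> f t)\<^sup>2) \<ge> x \<bullet> S - Hr\<^sup>2 / 8 * G x x" .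
  moreover have "x \<bullet> S - Hr\<^sup>2 / 8 * G x x = 2 * Q / Hr\<^sup>2 - Hr\<^sup>2 / 8 * G e e"
    unfolding xS xa xx c_def using Hp by (simp add: field_simps power2_eq_square)
  ultimately show ?thesis unfolding Q_def a_def by simp
qed

lemma G_upper:
  assumes "\<And>t. t \<in> T \<Longrightarrow> norm (f t) \<le> Hr"
  shows "G e e \<le> (lam + real (card T) * Hr\<^sup>2) * (norm e)\<^sup>2"
proof -
  have "(\<Sum>t\<in>T. (f t \<bullet> e) * (f t \<bullet> e)) \<le> (\<Sum>t\<in>T. Hr\<^sup>2 * (norm e)\<^sup>2)"
  proof (rule sum_mono)
    fix t assume t: "t \<in> T"
    have "\<bar>f t \<bullet> e\<bar> \<le> norm (f t) * norm e" by (rule Cauchy_Schwarz_ineq2)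
    also have "\<dots> \<le> Hr * norm e" using assms[OF t] by (intro mult_right_mono) auto
    finally have "\<bar>f t \<bullet> e\<bar> \<le> Hr * norm e" .
    then have "\<bar>f t \<bullet> e\<bar>\<^sup>2 \<le> (Hr * norm e)\<^sup>2" by (intro power_mono) auto
    then show "(f t \<bullet> e) * (f t \<bullet> e) \<le> Hr\<^sup>2 * (norm e)\<^sup>2"
      by (simp add: power2_eq_square algebra_simps)
  qed
  then show ?thesis
    by (simp add: G_def power2_norm_eq_inner algebra_simps)
qed

end

lemma hoeff_step:
  fixes p :: "'s::finite pmf" and V :: "'s \<Rightarrow> real"
  assumes V: "\<And>x. 0 \<le> V x \<and> V x \<le> Hr" and m: "m = (\<Sum>s'\<in>UNIV. pmf p s' * V s')"
  shows "(\<integral>\<^sup>+s'. ennreal (exp (l * (V s' - m) - Hr\<^sup>2 / 8 * l\<^sup>2)) \<partial>measure_pmf p) \<le> 1"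
proof -
  have Em: "measure_pmf.expectation p V = m"
    unfolding m by (subst integral_measure_pmf_real[of UNIV]) (auto simp: mult.commute)
  have Em': "measure_pmf.expectation p (\<lambda>x. - V x) = - m"
    using Em by simp
  have key: "(\<integral>\<^sup>+s'. ennreal (exp (l * (V s' - m))) \<partial>measure_pmf p) \<le> ennreal (exp (l\<^sup>2 * Hr\<^sup>2 / 8))"
  proof (cases "l = 0")
    case True then show ?thesis by (simp add: measure_pmf.emeasure_space_1)
  next
    case False
    show ?thesis
    proof (cases "l > 0")
      case True
      interpret ib: interval_bounded_random_variable "measure_pmf p" V 0 Hr
        by unfold_locales (auto simp: V)
      have "(\<integral>\<^sup>+s'. ennreal (exp (l * (V s' - measure_pmf.expectation p V))) \<partial>measure_pmf p)
            \<le> ennreal (exp (l\<^sup>2 * (Hr - 0)\<^sup>2 / 8))"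
        by (rule ib.Hoeffdings_lemma_nn_integral[OF True])
      then show ?thesis by (simp add: Em)
    next
      case False': False
      then have lneg: "-l > 0" using False by simp
      interpret ib: interval_bounded_random_variable "measure_pmf p" "\<lambda>x. - V x" "-Hr" 0
        by unfold_locales (auto simp: V)
      have "(\<integral>\<^sup>+s'. ennreal (exp ((-l) * (- V s' - measure_pmf.expectation p (\<lambda>x. - V x)))) \<partial>measure_pmf p)
            \<le> ennreal (exp ((-l)\<^sup>2 * (0 - (-Hr))\<^sup>2 / 8))"
        by (rule ib.Hoeffdings_lemma_nn_integral[OF lneg])
      then have "(\<integral>\<^sup>+s'. ennreal (exp ((-l) * (- V s' - (- m)))) \<partial>measure_pmf p)
            \<le> ennreal (exp ((-l)\<^sup>2 * (0 - (-Hr))\<^sup>2 / 8))" unfolding Em' .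
      moreover have "\<And>s'. (-l) * (- V s' - (- m)) = l * (V s' - m)" by (simp add: algebra_simps)
      ultimately show ?thesis by simp
    qed
  qed
  have "(\<integral>\<^sup>+s'. ennreal (exp (l * (V s' - m) - Hr\<^sup>2 / 8 * l\<^sup>2)) \<partial>measure_pmf p)
      = (\<integral>\<^sup>+s'. ennreal (exp (l * (V s' - m))) * ennreal (exp (- (Hr\<^sup>2 / 8 * l\<^sup>2))) \<partial>measure_pmf p)"
  proof (rule nn_integral_cong)
    fix s'
    have "ennreal (exp (l * (V s' - m))) * ennreal (exp (- (Hr\<^sup>2 / 8 * l\<^sup>2)))
          = ennreal (exp (l * (V s' - m)) * exp (- (Hr\<^sup>2 / 8 * l\<^sup>2)))"
      by (simp add: ennreal_mult)
    also have "exp (l * (V s' - m)) * exp (- (Hr\<^sup>2 / 8 * l\<^sup>2)) = exp (l * (V s' - m) - Hr\<^sup>2 / 8 * l\<^sup>2)"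
      by (simp add: mult_exp_exp)
    finally show "ennreal (exp (l * (V s' - m) - Hr\<^sup>2 / 8 * l\<^sup>2)) =
         ennreal (exp (l * (V s' - m))) * ennreal (exp (- (Hr\<^sup>2 / 8 * l\<^sup>2)))" by simp
  qed
  also have "\<dots> = (\<integral>\<^sup>+s'. ennreal (exp (l * (V s' - m))) \<partial>measure_pmf p) * ennreal (exp (- (Hr\<^sup>2 / 8 * l\<^sup>2)))"
    by (rule nn_integral_multc) simp
  also have "\<dots> \<le> ennreal (exp (l\<^sup>2 * Hr\<^sup>2 / 8)) * ennreal (exp (- (Hr\<^sup>2 / 8 * l\<^sup>2)))"
    by (intro mult_right_mono key) auto
  also have "\<dots> = 1"
  proof -
    have "ennreal (exp (l\<^sup>2 * Hr\<^sup>2 / 8)) * ennreal (exp (- (Hr\<^sup>2 / 8 * l\<^sup>2)))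
          = ennreal (exp (l\<^sup>2 * Hr\<^sup>2 / 8) * exp (- (Hr\<^sup>2 / 8 * l\<^sup>2)))"
      by (simp add: ennreal_mult)
    also have "exp (l\<^sup>2 * Hr\<^sup>2 / 8) * exp (- (Hr\<^sup>2 / 8 * l\<^sup>2)) = 1"
      by (simp add: mult_exp_exp)
    finally show ?thesis by simp
  qed
  finally show ?thesis .
qed


lemma roll_hd: "e \<in> set_pmf (roll pol P j n s) \<Longrightarrow> e \<noteq> [] \<and> e ! 0 = (s, pol j s)"
  by (induction n arbitrary: j s) auto

lemma roll_exp:
  fixes F :: "('s \<times> 'a) \<Rightarrow> 's \<Rightarrow> ennreal"
  assumes "i < n" and "\<And>s a. (\<integral>\<^sup>+s'. F (s, a) s' \<partial>measure_pmf (P (j + i) s a)) \<le> 1"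
  shows "(\<integral>\<^sup>+e. F (e ! i) (fst (e ! Suc i)) \<partial>measure_pmf (roll pol P j n s)) \<le> 1"
  using assms
proof (induction n arbitrary: j i s)
  case 0 then show ?case by simp
next
  case (Suc n)
  show ?case
  proof (cases i)
    case 0
    have "(\<integral>\<^sup>+e. F (e ! i) (fst (e ! Suc i)) \<partial>measure_pmf (roll pol P j (Suc n) s))
        = (\<integral>\<^sup>+s'. \<integral>\<^sup>+rest. F (s, pol j s) (fst (rest ! 0)) \<partial>measure_pmf (roll pol P (Suc j) n s') \<partial>measure_pmf (P j s (pol j s)))"
      by (simp add: 0)
    also have "\<dots> = (\<integral>\<^sup>+s'. F (s, pol j s) s' \<partial>measure_pmf (P j s (pol j s)))"
    proof (rule nn_integral_cong)
      fix s'
      have "(\<integral>\<^sup>+rest. F (s, pol j s) (fst (rest ! 0)) \<partial>measure_pmf (roll pol P (Suc j) n s'))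
          = (\<integral>\<^sup>+rest. F (s, pol j s) s' \<partial>measure_pmf (roll pol P (Suc j) n s'))"
        by (intro nn_integral_cong_AE) (auto simp: AE_measure_pmf_iff dest: roll_hd)
      also have "\<dots> = F (s, pol j s) s'" by (simp add: measure_pmf.emeasure_space_1)
      finally show "(\<integral>\<^sup>+rest. F (s, pol j s) (fst (rest ! 0)) \<partial>measure_pmf (roll pol P (Suc j) n s')) = F (s, pol j s) s'" .
    qed
    also have "\<dots> \<le> 1" using Suc.prems(2)[of s "pol j s"] by (simp add: 0)
    finally show ?thesis .
  next
    case (Suc i')
    have "(\<integral>\<^sup>+e. F (e ! i) (fst (e ! Suc i)) \<partial>measure_pmf (roll pol P j (Suc n) s))
        = (\<integral>\<^sup>+s'. \<integral>\<^sup>+rest. F (rest ! i') (fst (rest ! Suc i')) \<partial>measure_pmf (roll pol P (Suc j) n s') \<partial>measure_pmf (P j s (pol j s)))"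
      by (simp add: Suc)
    also have "\<dots> \<le> (\<integral>\<^sup>+s'. 1 \<partial>measure_pmf (P j s (pol j s)))"
    proof (rule nn_integral_mono)
      fix s'
      show "(\<integral>\<^sup>+rest. F (rest ! i') (fst (rest ! Suc i')) \<partial>measure_pmf (roll pol P (Suc j) n s')) \<le> 1"
        using Suc.prems Suc.IH[of i' "Suc j" s'] by (simp add: \<open>i = Suc i'\<close>)
    qed
    also have "\<dots> = 1" by (simp add: measure_pmf.emeasure_space_1)
    finally show ?thesis .
  qed
qed

lemma histp_len: "hs \<in> set_pmf (histp \<phi> P s1 H lam beta sel pick n) \<Longrightarrow> length hs = n"
  by (induction n arbitrary: hs) auto

lemma hist_fn_snoc_old: "length hs = n \<Longrightarrow> 1 \<le> t \<Longrightarrow> t \<le> n \<Longrightarrow> hist_fn (hs @ [e]) t = hist_fn hs t"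
  unfolding hist_fn_def by (subst nth_append) auto

lemma hist_fn_snoc_new: "length hs = n \<Longrightarrow> hist_fn (hs @ [e]) (Suc n) = e"
  unfolding hist_fn_def by (metis diff_Suc_1 nth_append_length)


definition fv where "fv \<phi> lam sel ep h t = phik \<phi> lam sel ep t h (st ep t h) (act ep t h)"
definition yv where "yv \<phi> lam sel ep h t = tV \<phi> lam sel ep t h (st ep t h) (act ep t h) (st ep t (Suc h))"
definition etav where "etav \<phi> lam sel th ep h t = yv \<phi> lam sel ep h t - th h \<bullet> fv \<phi> lam sel ep h t"
definition trm where "trm \<phi> lam sel th Hr x ep h t =
   (x \<bullet> fv \<phi> lam sel ep h t) * etav \<phi> lam sel th ep h t - Hr\<^sup>2 / 8 * (x \<bullet> fv \<phi> lam sel ep h t)\<^sup>2"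
definition Zs where "Zs \<phi> lam sel th Hr x ep h k = (\<Sum>t\<in>{1..<k}. trm \<phi> lam sel th Hr x ep h t)"

lemma LamA_local:
  assumes "\<forall>t\<in>{1..n}. ep t = ep' t" "m \<le> n"
  shows "LamA \<phi> lam sel ep m h = LamA \<phi> lam sel ep' m h"
  using assms(2)
proof (induction m)
  case 0 then show ?case by simp
next
  case (Suc m)
  have "ep (Suc m) = ep' (Suc m)" using assms(1) Suc.prems by auto
  then show ?case using Suc by (simp add: st_def act_def)
qed

lemma trm_local:
  assumes "\<forall>t'\<in>{1..t}. ep t' = ep' t'" "1 \<le> t"
  shows "trm \<phi> lam sel th Hr x ep h t = trm \<phi> lam sel th Hr x ep' h t"
proof -
  have L: "LamA \<phi> lam sel ep (t - 1) h = LamA \<phi> lam sel ep' (t - 1) h"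
    by (rule LamA_local[OF assms(1)]) simp
  have e: "ep t = ep' t" using assms by auto
  show ?thesis
    unfolding trm_def etav_def yv_def fv_def phik_def tV_def Lam_def L
    by (simp add: st_def act_def e)
qed

lemma Zs_local:
  assumes "\<forall>t\<in>{1..n}. ep t = ep' t" "k \<le> Suc n"
  shows "Zs \<phi> lam sel th Hr x ep h k = Zs \<phi> lam sel th Hr x ep' h k"
  unfolding Zs_def
proof (rule sum.cong)
  fix t assume t: "t \<in> {1..<k}"
  show "trm \<phi> lam sel th Hr x ep h t = trm \<phi> lam sel th Hr x ep' h t"
    using assms t by (intro trm_local) auto
qed simp

lemma mixture_inner:
  assumes "\<forall>s a s'. pmf (Ph s a) s' = th \<bullet> \<phi> s a s'"
  shows "th \<bullet> phiV \<phi> s a V = (\<Sum>s'\<in>UNIV. pmf (Ph s a) s' * V s')"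
  unfolding phiV_def using assms by (simp add: inner_sum_right mult.commute)

lemma Zs_Suc:
  "1 \<le> k \<Longrightarrow> Zs \<phi> lam sel th Hr x ep h (Suc k) = Zs \<phi> lam sel th Hr x ep h k + trm \<phi> lam sel th Hr x ep h k"
  unfolding Zs_def by (simp add: atLeastLessThanSuc add.commute)

lemma exp_Zs:
  fixes \<phi> :: "'s::finite \<Rightarrow> 'a::finite \<Rightarrow> 's \<Rightarrow> real^'d::finite"
  assumes mix: "\<forall>s a s'. pmf (P h s a) s' = \<theta> h \<bullet> \<phi> s a s'"
    and selV: "\<forall>k h M s a. sel k h M s a \<in> Vset H"
    and h: "1 \<le> h" "h \<le> H"
  shows "k \<le> Suc n \<Longrightarrow>
    (\<integral>\<^sup>+hs. ennreal (exp (Zs \<phi> lam sel \<theta> (real H) x (hist_fn hs) h k)) \<partial>measure_pmf (histp \<phi> P s1 H lam beta sel pick n)) \<le> 1"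
proof (induction n arbitrary: k)
  case 0
  then have "{1..<k} = {}" by auto
  then show ?case by (simp add: Zs_def)
next
  case (Suc n)
  let ?Z = "\<lambda>hs k. ennreal (exp (Zs \<phi> lam sel \<theta> (real H) x (hist_fn hs) h k))"
  let ?roll = "\<lambda>hs. roll (polk \<phi> H lam beta sel pick (hist_fn hs) (Suc n)) P 1 H s1"
  have eq: "(\<integral>\<^sup>+hs. ?Z hs k \<partial>measure_pmf (histp \<phi> P s1 H lam beta sel pick (Suc n)))
     = (\<integral>\<^sup>+hs. \<integral>\<^sup>+e. ?Z (hs @ [e]) k \<partial>measure_pmf (?roll hs) \<partial>measure_pmf (histp \<phi> P s1 H lam beta sel pick n))"
    by simp
  have agree: "\<forall>t\<in>{1..n}. hist_fn (hs @ [e]) t = hist_fn hs t" if "hs \<in> set_pmf (histp \<phi> P s1 H lam beta sel pick n)" for hs e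
    using hist_fn_snoc_old[OF histp_len[OF that]] by auto
  show ?case
  proof (cases "k \<le> Suc n")
    case True
    have "(\<integral>\<^sup>+hs. \<integral>\<^sup>+e. ?Z (hs @ [e]) k \<partial>measure_pmf (?roll hs) \<partial>measure_pmf (histp \<phi> P s1 H lam beta sel pick n))
        = (\<integral>\<^sup>+hs. ?Z hs k \<partial>measure_pmf (histp \<phi> P s1 H lam beta sel pick n))"
    proof (intro nn_integral_cong_AE, unfold AE_measure_pmf_iff, intro ballI)
      fix hs assume hs: "hs \<in> set_pmf (histp \<phi> P s1 H lam beta sel pick n)"
      have "\<And>e. ?Z (hs @ [e]) k = ?Z hs k"
        using Zs_local[OF agree[OF hs] True] by simp
      then show "(\<integral>\<^sup>+e. ?Z (hs @ [e]) k \<partial>measure_pmf (?roll hs)) = ?Z hs k"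
        by (simp add: measure_pmf.emeasure_space_1)
    qed
    then show ?thesis using eq Suc.IH[OF True] by simp
  next
    case False
    then have k: "k = Suc (Suc n)" using Suc.prems by simp
    have "(\<integral>\<^sup>+hs. \<integral>\<^sup>+e. ?Z (hs @ [e]) k \<partial>measure_pmf (?roll hs) \<partial>measure_pmf (histp \<phi> P s1 H lam beta sel pick n))
        \<le> (\<integral>\<^sup>+hs. ?Z hs (Suc n) \<partial>measure_pmf (histp \<phi> P s1 H lam beta sel pick n))"
    proof (intro nn_integral_mono_AE, unfold AE_measure_pmf_iff, intro ballI)
      fix hs assume hs: "hs \<in> set_pmf (histp \<phi> P s1 H lam beta sel pick n)"
      have len: "length hs = n" by (rule histp_len[OF hs])
      define L0 where "L0 = LamA \<phi> lam sel (hist_fn hs) n h"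
      define F where "F = (\<lambda>(sa::'s \<times> 'a) s'. ennreal (exp (
          (x \<bullet> phiV \<phi> (fst sa) (snd sa) (sel (Suc n) h L0 (fst sa) (snd sa))) *
            (sel (Suc n) h L0 (fst sa) (snd sa) s' - \<theta> h \<bullet> phiV \<phi> (fst sa) (snd sa) (sel (Suc n) h L0 (fst sa) (snd sa)))
          - (real H)\<^sup>2 / 8 * (x \<bullet> phiV \<phi> (fst sa) (snd sa) (sel (Suc n) h L0 (fst sa) (snd sa)))\<^sup>2)))"
      have split: "?Z (hs @ [e]) k = ?Z hs (Suc n) * F (e ! (h - 1)) (fst (e ! Suc (h - 1)))" for e
      proof -
        let ?ep = "hist_fn (hs @ [e])"
        have "Zs \<phi> lam sel \<theta> (real H) x ?ep h k = Zs \<phi> lam sel \<theta> (real H) x ?ep h (Suc n) + trm \<phi> lam sel \<theta> (real H) x ?ep h (Suc n)"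
          unfolding k by (rule Zs_Suc) simp
        also have "Zs \<phi> lam sel \<theta> (real H) x ?ep h (Suc n) = Zs \<phi> lam sel \<theta> (real H) x (hist_fn hs) h (Suc n)"
          by (rule Zs_local[OF agree[OF hs]]) simp
        also have "LamA \<phi> lam sel ?ep n h = L0"
          unfolding L0_def by (rule LamA_local[OF agree[OF hs]]) simp
        then have "trm \<phi> lam sel \<theta> (real H) x ?ep h (Suc n) =
            (case (e ! (h - 1)) of (s, a) \<Rightarrow> 
              (x \<bullet> phiV \<phi> s a (sel (Suc n) h L0 s a)) *
              (sel (Suc n) h L0 s a (fst (e ! Suc (h - 1))) - \<theta> h \<bullet> phiV \<phi> s a (sel (Suc n) h L0 s a))
              - (real H)\<^sup>2 / 8 * (x \<bullet> phiV \<phi> s a (sel (Suc n) h L0 s a))\<^sup>2)"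
          using h hist_fn_snoc_new[OF len, of e]
          by (simp add: trm_def etav_def yv_def fv_def phik_def tV_def Lam_def st_def act_def split: prod.splits)
        finally show ?thesis
          by (simp add: F_def split: prod.splits flip: ennreal_mult) (simp add: exp_add)
      qed
      have "(\<integral>\<^sup>+e. ?Z (hs @ [e]) k \<partial>measure_pmf (?roll hs))
          = ?Z hs (Suc n) * (\<integral>\<^sup>+e. F (e ! (h - 1)) (fst (e ! Suc (h - 1))) \<partial>measure_pmf (?roll hs))"
        unfolding split by (rule nn_integral_cmult) simp
      also have "\<dots> \<le> ?Z hs (Suc n) * 1"
      proof (intro mult_left_mono roll_exp)
        show "h - 1 < H" using h by simp
        fix s a
        have hh: "1 + (h - 1) = h" using h by simp
        have "(\<integral>\<^sup>+s'. F (s, a) s' \<partial>measure_pmf (P h s a)) \<le> 1"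
          unfolding F_def
          using selV
          by (intro hoeff_step[where Hr="real H"]) (auto simp: Vset_def mixture_inner[OF mix])
        then show "(\<integral>\<^sup>+s'. F (s, a) s' \<partial>measure_pmf (P (1 + (h - 1)) s a)) \<le> 1" unfolding hh .
      qed simp
      finally show "(\<integral>\<^sup>+e. ?Z (hs @ [e]) k \<partial>measure_pmf (?roll hs)) \<le> ?Z hs (Suc n)" by simp
    qed
    then show ?thesis using eq Suc.IH[of "Suc n"] by simp
  qed
qed


lemma markov_exp:
  assumes "(\<integral>\<^sup>+x. ennreal (exp (f x)) \<partial>measure_pmf p) \<le> 1"
  shows "measure_pmf.prob p {x. c \<le> f x} \<le> exp (- c)"
proof -
  have "emeasure (measure_pmf p) {x. c \<le> f x} = (\<integral>\<^sup>+x. indicator {x. c \<le> f x} x \<partial>measure_pmf p)"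
    by simp
  also have "\<dots> \<le> (\<integral>\<^sup>+x. ennreal (exp (- c)) * ennreal (exp (f x)) \<partial>measure_pmf p)"
  proof (rule nn_integral_mono)
    fix x
    show "indicator {x. c \<le> f x} x \<le> ennreal (exp (- c)) * ennreal (exp (f x))"
    proof (cases "c \<le> f x")
      case True
      have "1 \<le> exp (- c) * exp (f x)" using True by (simp add: mult_exp_exp)
      then have "ennreal 1 \<le> ennreal (exp (- c) * exp (f x))" by (rule ennreal_leI)
      then show ?thesis using True by (simp add: ennreal_mult)
    qed simp
  qed
  also have "\<dots> = ennreal (exp (- c)) * (\<integral>\<^sup>+x. ennreal (exp (f x)) \<partial>measure_pmf p)"
    by (rule nn_integral_cmult) simp
  also have "\<dots> \<le> ennreal (exp (- c)) * 1"
    by (intro mult_left_mono assms) simp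
  finally have "ennreal (measure_pmf.prob p {x. c \<le> f x}) \<le> ennreal (exp (- c))"
    by (simp add: measure_pmf.emeasure_eq_measure)
  then show ?thesis by (simp add: ennreal_le_iff)
qed

lemma union_bound_good:
  assumes fin: "finite I" and each: "\<And>i. i \<in> I \<Longrightarrow> measure_pmf.prob p (A i) \<le> r"
    and good: "\<And>x. (\<forall>i\<in>I. x \<notin> A i) \<Longrightarrow> x \<in> Good"
  shows "measure_pmf.prob p Good \<ge> 1 - real (card I) * r"
proof -
  have "measure_pmf.prob p (\<Union>i\<in>I. A i) \<le> (\<Sum>i\<in>I. measure_pmf.prob p (A i))"
    by (rule measure_pmf.finite_measure_subadditive_finite[OF fin]) auto
  also have "\<dots> \<le> (\<Sum>i\<in>I. r)" by (rule sum_mono) (rule each)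
  finally have U: "measure_pmf.prob p (\<Union>i\<in>I. A i) \<le> real (card I) * r" by simp
  have "UNIV - (\<Union>i\<in>I. A i) \<subseteq> Good" using good by blast
  then have "measure_pmf.prob p (UNIV - (\<Union>i\<in>I. A i)) \<le> measure_pmf.prob p Good"
    by (intro measure_pmf.finite_measure_mono) auto
  moreover have "measure_pmf.prob p (UNIV - (\<Union>i\<in>I. A i)) = 1 - measure_pmf.prob p (\<Union>i\<in>I. A i)"
    using measure_pmf.prob_compl[of "\<Union>i\<in>I. A i" p] by simp
  ultimately show ?thesis using U by linarith
qed

definition grid :: "real \<Rightarrow> int \<Rightarrow> (real^'d::finite) set" where
  "grid eps J = (\<lambda>j. \<chi> i. eps * real_of_int (j i)) ` (PiE UNIV (\<lambda>_. {-J..J}))"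

lemma grid_finite: "finite (grid eps J)"
  unfolding grid_def by (intro finite_imageI finite_PiE) auto

lemma grid_card: "card (grid eps J :: (real^'d::finite) set) \<le> nat (2 * J + 1) ^ CARD('d)"
proof -
  have "card (grid eps J :: (real^'d) set) \<le> card (PiE (UNIV::'d set) (\<lambda>_. {-J..J}))"
    unfolding grid_def by (rule card_image_le) (intro finite_PiE, auto)
  also have "\<dots> = nat (2 * J + 1) ^ CARD('d)"
    by (simp add: card_PiE)
  finally show ?thesis .
qed

lemma grid_round:
  fixes x :: "real^'d::finite"
  assumes eps: "eps > 0" and xn: "norm x \<le> real_of_int J * eps"
  shows "\<exists>g\<in>grid eps J. (norm (x - g))\<^sup>2 \<le> real CARD('d) * (eps / 2)\<^sup>2"
proof -
  define j where "j = (\<lambda>i. round (x $ i / eps))"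
  define g :: "real^'d" where "g = (\<chi> i. eps * real_of_int (j i))"
  have jb: "j i \<in> {-J..J}" for i
  proof -
    have "\<bar>x $ i\<bar> \<le> real_of_int J * eps" using component_le_norm_cart[of x i] xn by linarith
    moreover have "\<bar>x $ i / eps\<bar> = \<bar>x $ i\<bar> / eps" using eps by (simp add: abs_divide)
    ultimately have a: "\<bar>x $ i / eps\<bar> \<le> real_of_int J" using eps by (simp add: pos_divide_le_eq)
    have "real_of_int (j i) \<le> x $ i / eps + 1/2" unfolding j_def by (rule of_int_round_le)
    then have u: "real_of_int (j i) < real_of_int J + 1" using a by linarith
    have "real_of_int (j i) \<ge> x $ i / eps - 1/2" unfolding j_def by (rule of_int_round_ge)
    then have l: "real_of_int (j i) > - real_of_int J - 1" using a by linarith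
    from u l show ?thesis by simp
  qed
  have gin: "g \<in> grid eps J"
    unfolding grid_def g_def using jb by (intro imageI) (auto simp: PiE_def extensional_def)
  have comp: "(x $ i - g $ i)\<^sup>2 \<le> (eps / 2)\<^sup>2" for i
  proof -
    have "\<bar>real_of_int (j i) - x $ i / eps\<bar> \<le> 1/2" unfolding j_def by (rule of_int_round_abs_le)
    then have "\<bar>eps * (real_of_int (j i) - x $ i / eps)\<bar> \<le> eps * (1/2)"
      using eps by (simp add: abs_mult)
    moreover have "eps * (real_of_int (j i) - x $ i / eps) = g $ i - x $ i"
      using eps by (simp add: g_def field_simps)
    ultimately have "\<bar>x $ i - g $ i\<bar> \<le> eps / 2" by (simp add: abs_minus_commute)
    then show ?thesis by (metis abs_ge_zero power2_abs power_mono)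
  qed
  have "(norm (x - g))\<^sup>2 = (\<Sum>i\<in>UNIV. (x $ i - g $ i)\<^sup>2)"
    unfolding power2_norm_eq_inner inner_vec_def by (simp add: power2_eq_square)
  also have "\<dots> \<le> (\<Sum>i\<in>(UNIV::'d set). (eps / 2)\<^sup>2)" by (rule sum_mono) (rule comp)
  also have "\<dots> = real CARD('d) * (eps / 2)\<^sup>2" by simp
  finally show ?thesis using gin by blast
qed


lemma LamA_mul:
  "LamA \<phi> lam sel ep n h *v y = lam *\<^sub>R y + (\<Sum>t\<in>{1..<Suc n}. (fv \<phi> lam sel ep h t \<bullet> y) *\<^sub>R fv \<phi> lam sel ep h t)"
proof (induction n)
  case 0 then show ?case by (simp add: scaled_id_mult)
next
  case (Suc n)
  have fv: "fv \<phi> lam sel ep h (Suc n) = phiV \<phi> (st ep (Suc n) h) (act ep (Suc n) h)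
                (sel (Suc n) h (LamA \<phi> lam sel ep n h) (st ep (Suc n) h) (act ep (Suc n) h))"
    by (simp add: fv_def phik_def tV_def Lam_def)
  show ?case
    using Suc by (simp add: matrix_vector_mult_add_rdistrib outer_mult fv[symmetric] atLeastLessThanSuc add.assoc)
qed

lemma Lam_mul:
  "1 \<le> k \<Longrightarrow> Lam \<phi> lam sel ep k h *v y = lam *\<^sub>R y + (\<Sum>t\<in>{1..<k}. (fv \<phi> lam sel ep h t \<bullet> y) *\<^sub>R fv \<phi> lam sel ep h t)"
  unfolding Lam_def using LamA_mul[of \<phi> lam sel ep "k - 1" h y] by simp

lemma phiV_bound:
  fixes \<phi> :: "'s::finite \<Rightarrow> 'a \<Rightarrow> 's \<Rightarrow> real^'d::finite"
  assumes phi_bd: "\<forall>s a V. (\<forall>x. 0 \<le> V x \<and> V x \<le> 1) \<longrightarrow> norm (phiV \<phi> s a V) \<le> 1"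
    and V: "V \<in> Vset H" and H: "H > 0"
  shows "norm (phiV \<phi> s a V) \<le> real H"
proof -
  have "phiV \<phi> s a V = real H *\<^sub>R phiV \<phi> s a (\<lambda>x. V x / real H)"
    using H by (simp add: phiV_def scaleR_sum_right)
  moreover have "norm (phiV \<phi> s a (\<lambda>x. V x / real H)) \<le> 1"
    using phi_bd V H by (auto simp: Vset_def)
  ultimately show ?thesis using H by simp
qed

lemma mean_bound:
  fixes p :: "'s::finite pmf"
  assumes "V \<in> Vset H"
  shows "0 \<le> (\<Sum>s'\<in>UNIV. pmf p s' * V s') \<and> (\<Sum>s'\<in>UNIV. pmf p s' * V s') \<le> real H"
proof
  show "0 \<le> (\<Sum>s'\<in>UNIV. pmf p s' * V s')" using assms by (auto simp: Vset_def intro!: sum_nonneg)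
  have "(\<Sum>s'\<in>UNIV. pmf p s' * V s') \<le> (\<Sum>s'\<in>UNIV. pmf p s' * real H)"
    using assms by (auto simp: Vset_def intro!: sum_mono mult_left_mono)
  also have "\<dots> = real H" by (simp add: sum_distrib_right[symmetric] sum_pmf_eq_1)
  finally show "(\<Sum>s'\<in>UNIV. pmf p s' * V s') \<le> real H" .
qed


lemma confidence:
  fixes \<phi> :: "'s::finite \<Rightarrow> 'a::finite \<Rightarrow> 's \<Rightarrow> real^'d::finite" and \<theta> :: "nat \<Rightarrow> real^'d"
    and sel :: "nat \<Rightarrow> nat \<Rightarrow> real^'d^'d \<Rightarrow> 's \<Rightarrow> 'a \<Rightarrow> ('s \<Rightarrow> real)"
  assumes mix: "\<forall>s a s'. pmf (P h s a) s' = \<theta> h \<bullet> \<phi> s a s'"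
    and selV: "\<forall>k h M s a. sel k h M s a \<in> Vset H"
    and sel_max: "\<forall>k h M s a. \<forall>V\<in>Vset H. wnorm (matrix_inv M) (phiV \<phi> s a V)
                                   \<le> wnorm (matrix_inv M) (phiV \<phi> s a (sel k h M s a))"
    and phi_bd: "\<forall>s a V. (\<forall>x. 0 \<le> V x \<and> V x \<le> 1) \<longrightarrow> norm (phiV \<phi> s a V) \<le> 1"
    and th: "norm (\<theta> h) \<le> B" and lamB: "lam * B\<^sup>2 = 1" and lam: "lam > 0"
    and H: "H > 0" and k: "1 \<le> k" "k \<le> K"
    and eps: "eps > 0" and Jeps: "4 * B * sqrt (real K) / real H \<le> real_of_int J * eps"
    and slack: "(real H)\<^sup>2 / 8 * (lam + real K * (real H)\<^sup>2) * (eps / 2)\<^sup>2 \<le> 1 / 2"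
    and good: "\<forall>x\<in>grid eps J. Zs \<phi> lam sel \<theta> (real H) x ep h k < c"
    and W: "(real H)\<^sup>2 / 2 * (c + real CARD('d) / 2) \<le> W\<^sup>2" "W \<ge> 0"
    and beta: "W + 1 \<le> beta"
    and V: "V \<in> Vset H"
  shows "\<bar>thetahat \<phi> lam sel ep k h \<bullet> phiV \<phi> s a V - \<theta> h \<bullet> phiV \<phi> s a V\<bar> \<le> bonus \<phi> lam beta sel ep k h s a"
proof -
  define L where "L = Lam \<phi> lam sel ep k h"
  define T where "T = {1..<k}"
  define f where "f = fv \<phi> lam sel ep h"
  define \<eta> where "\<eta> = etav \<phi> lam sel \<theta> ep h"
  define S where "S = (\<Sum>t\<in>T. \<eta> t *\<^sub>R f t)"
  define wn where "wn = wnorm (matrix_inv L)"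
  interpret g: gram L lam f T
    by unfold_locales (auto simp: L_def T_def f_def Lam_mul[OF k(1)] lam)
  have f_bd: "norm (f t) \<le> real H" for t
    unfolding f_def fv_def phik_def tV_def using selV H by (intro phiV_bound[OF phi_bd]) auto
  have eta_bd: "\<bar>\<eta> t\<bar> \<le> real H" for t
  proof -
    let ?V = "tV \<phi> lam sel ep t h (st ep t h) (act ep t h)"
    have V1: "?V \<in> Vset H" unfolding tV_def using selV by auto
    have "\<theta> h \<bullet> f t = (\<Sum>s'\<in>UNIV. pmf (P h (st ep t h) (act ep t h)) s' * ?V s')"
      unfolding f_def fv_def phik_def by (rule mixture_inner[OF mix])
    then have m: "0 \<le> \<theta> h \<bullet> f t \<and> \<theta> h \<bullet> f t \<le> real H" using mean_bound[OF V1] by simp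
    have y: "0 \<le> yv \<phi> lam sel ep h t \<and> yv \<phi> lam sel ep h t \<le> real H"
      using V1 unfolding yv_def Vset_def by auto
    show ?thesis unfolding \<eta>_def etav_def using m y f_def by auto
  qed
  have cardT: "card T \<le> K" unfolding T_def using k by simp
  define av where "av = matrix_inv L *v S"
  define Q where "Q = g.G av av"
  have Q0: "Q \<ge> 0" unfolding Q_def by (rule g.G_nonneg)
  have "Q \<le> (\<Sum>t\<in>T. (\<eta> t)\<^sup>2)" unfolding Q_def av_def by (rule g.Q_le[OF S_def])
  also have "\<dots> \<le> (\<Sum>t\<in>T. (real H)\<^sup>2)"
    by (intro sum_mono) (metis abs_ge_zero eta_bd power2_abs power_mono)
  also have "\<dots> \<le> real K * (real H)\<^sup>2" using cardT by (simp add: mult_right_mono)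
  finally have QK: "Q \<le> real K * (real H)\<^sup>2" .
  have "B \<noteq> 0" using lamB by auto
  moreover have "B \<ge> 0" using th norm_ge_zero[of "\<theta> h"] by linarith
  ultimately have Bpos: "B > 0" by simp
  have "lam * (norm av)\<^sup>2 \<le> Q" unfolding Q_def by (rule g.norm_le_G)
  then have "B\<^sup>2 * (lam * (norm av)\<^sup>2) \<le> B\<^sup>2 * (real K * (real H)\<^sup>2)"
    using QK by (intro mult_left_mono) auto
  moreover have "B\<^sup>2 * (lam * (norm av)\<^sup>2) = (lam * B\<^sup>2) * (norm av)\<^sup>2" by (simp add: algebra_simps)
  moreover have "(real H * B * sqrt (real K))\<^sup>2 = B\<^sup>2 * (real K * (real H)\<^sup>2)"
    by (simp add: power_mult_distrib algebra_simps)
  ultimately have "(norm av)\<^sup>2 \<le> (real H * B * sqrt (real K))\<^sup>2"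
    using lamB by simp
  moreover have "0 \<le> real H * B * sqrt (real K)" using Bpos by simp
  ultimately have na: "norm av \<le> real H * B * sqrt (real K)"
    by (rule power2_le_imp_le)
  define xs where "xs = (4 / (real H)\<^sup>2) *\<^sub>R av"
  have "norm xs = 4 / (real H)\<^sup>2 * norm av" unfolding xs_def by simp
  also have "\<dots> \<le> 4 / (real H)\<^sup>2 * (real H * B * sqrt (real K))"
    using na by (intro mult_left_mono) auto
  also have "\<dots> = 4 * B * sqrt (real K) / real H" using H by (simp add: power2_eq_square field_simps)
  finally have "norm xs \<le> real_of_int J * eps" using Jeps by linarith
  from grid_round[OF eps this] obtain gp where gp: "gp \<in> grid eps J"
    and gpn: "(norm (xs - gp))\<^sup>2 \<le> real CARD('d) * (eps / 2)\<^sup>2" by blast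
  define e where "e = gp - xs"
  have gpe: "gp = (4 / (real H)\<^sup>2) *\<^sub>R (matrix_inv L *v S) + e"
    unfolding e_def xs_def av_def by simp
  have Zeq: "Zs \<phi> lam sel \<theta> (real H) gp ep h k = (\<Sum>t\<in>T. (gp \<bullet> f t) * \<eta> t - (real H)\<^sup>2 / 8 * (gp \<bullet> f t)\<^sup>2)"
    unfolding Zs_def trm_def T_def f_def \<eta>_def ..
  have Hr: "real H > 0" using H by simp
  have val: "Zs \<phi> lam sel \<theta> (real H) gp ep h k \<ge> 2 * Q / (real H)\<^sup>2 - (real H)\<^sup>2 / 8 * g.G e e"
    using g.value_lower[OF Hr S_def gpe] unfolding Zeq Q_def av_def by simp
  have "g.G e e \<le> (lam + real (card T) * (real H)\<^sup>2) * (norm e)\<^sup>2"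
    by (rule g.G_upper) (rule f_bd)
  also have "\<dots> \<le> (lam + real K * (real H)\<^sup>2) * (norm e)\<^sup>2"
    using cardT by (intro mult_right_mono add_left_mono) auto
  also have "\<dots> \<le> (lam + real K * (real H)\<^sup>2) * (real CARD('d) * (eps / 2)\<^sup>2)"
  proof (rule mult_left_mono)
    show "(norm e)\<^sup>2 \<le> real CARD('d) * (eps / 2)\<^sup>2" using gpn by (simp add: e_def norm_minus_commute)
    show "0 \<le> lam + real K * (real H)\<^sup>2" using lam by simp
  qed
  finally have "(real H)\<^sup>2 / 8 * g.G e e \<le> (real H)\<^sup>2 / 8 * ((lam + real K * (real H)\<^sup>2) * (real CARD('d) * (eps / 2)\<^sup>2))"
    by (intro mult_left_mono) auto
  also have "\<dots> = real CARD('d) * ((real H)\<^sup>2 / 8 * (lam + real K * (real H)\<^sup>2) * (eps / 2)\<^sup>2)" by simp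
  also have "\<dots> \<le> real CARD('d) * (1/2)" using slack by (intro mult_left_mono) auto
  finally have sl: "(real H)\<^sup>2 / 8 * g.G e e \<le> real CARD('d) / 2" by simp
  have "Zs \<phi> lam sel \<theta> (real H) gp ep h k < c" using good gp by blast
  then have "2 * Q / (real H)\<^sup>2 < c + real CARD('d) / 2" using val sl by linarith
  then have "Q < (real H)\<^sup>2 / 2 * (c + real CARD('d) / 2)" using Hr by (simp add: field_simps)
  then have "Q \<le> W\<^sup>2" using W by linarith
  then have "sqrt Q \<le> sqrt (W\<^sup>2)" by (rule real_sqrt_le_mono)
  then have sQ: "sqrt Q \<le> W" using W(2) by simp
  have Lth: "L *v \<theta> h = lam *\<^sub>R \<theta> h + (\<Sum>t\<in>T. (f t \<bullet> \<theta> h) *\<^sub>R f t)" by (rule g.Lmul)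
  have sumy: "(\<Sum>t\<in>T. yv \<phi> lam sel ep h t *\<^sub>R f t) = (L *v \<theta> h - lam *\<^sub>R \<theta> h) + S"
  proof -
    have "(\<Sum>t\<in>T. yv \<phi> lam sel ep h t *\<^sub>R f t) = (\<Sum>t\<in>T. (f t \<bullet> \<theta> h) *\<^sub>R f t + \<eta> t *\<^sub>R f t)"
      by (intro sum.cong) (auto simp: \<eta>_def etav_def f_def inner_commute algebra_simps)
    then show ?thesis by (simp add: sum.distrib Lth S_def)
  qed
  have th_eq: "thetahat \<phi> lam sel ep k h = matrix_inv L *v (\<Sum>t\<in>T. yv \<phi> lam sel ep h t *\<^sub>R f t)"
    unfolding thetahat_def L_def T_def f_def yv_def fv_def ..
  have th2: "thetahat \<phi> lam sel ep k h = \<theta> h - lam *\<^sub>R (matrix_inv L *v \<theta> h) + av"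
    unfolding th_eq sumy av_def
    by (simp add: matrix_vector_right_distrib matrix_vector_mult_diff_distrib matrix_vector_mult_scaleR g.L_inv_v')
  define v where "v = phiV \<phi> s a V"
  have diff: "thetahat \<phi> lam sel ep k h \<bullet> v - \<theta> h \<bullet> v = av \<bullet> v - lam * ((matrix_inv L *v \<theta> h) \<bullet> v)"
    unfolding th2 by (simp add: inner_diff_left inner_add_left)
  have c1: "\<bar>av \<bullet> v\<bar> \<le> wn S * wn v" unfolding av_def wn_def by (rule g.inv_CS)
  have c2: "\<bar>(matrix_inv L *v \<theta> h) \<bullet> v\<bar> \<le> wn (\<theta> h) * wn v" unfolding wn_def by (rule g.inv_CS)
  have wnS: "wn S = sqrt Q" unfolding wn_def wnorm_def Q_def av_def by (simp add: g.inv_quad)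
  have "(lam * wn (\<theta> h))\<^sup>2 = lam\<^sup>2 * g.G (matrix_inv L *v \<theta> h) (matrix_inv L *v \<theta> h)"
    unfolding wn_def wnorm_def g.inv_quad
    by (simp add: power_mult_distrib g.G_nonneg)
  also have "\<dots> \<le> lam * (norm (\<theta> h))\<^sup>2" by (rule g.theta_part)
  also have "\<dots> \<le> lam * B\<^sup>2" using th lam by (intro mult_left_mono power_mono) auto
  finally have "(lam * wn (\<theta> h))\<^sup>2 \<le> 1" using lamB by simp
  then have "(lam * wn (\<theta> h))\<^sup>2 \<le> 1\<^sup>2" by simp
  then have wth: "lam * wn (\<theta> h) \<le> 1" by (rule power2_le_imp_le) simp
  have wn0: "wn x \<ge> 0" for x unfolding wn_def wnorm_def g.inv_quad by (simp add: g.G_nonneg)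
  have "\<bar>thetahat \<phi> lam sel ep k h \<bullet> v - \<theta> h \<bullet> v\<bar> \<le> \<bar>av \<bullet> v\<bar> + lam * \<bar>(matrix_inv L *v \<theta> h) \<bullet> v\<bar>"
  proof -
    have "\<bar>lam * ((matrix_inv L *v \<theta> h) \<bullet> v)\<bar> = lam * \<bar>(matrix_inv L *v \<theta> h) \<bullet> v\<bar>"
      using lam by (simp add: abs_mult)
    then show ?thesis unfolding diff by (metis abs_triangle_ineq4)
  qed
  also have "\<dots> \<le> wn S * wn v + lam * (wn (\<theta> h) * wn v)"
    using c1 c2 lam by (intro add_mono mult_left_mono) auto
  also have "\<dots> = (sqrt Q + lam * wn (\<theta> h)) * wn v" by (simp add: wnS algebra_simps)
  also have "\<dots> \<le> beta * wn v"
    using sQ wth beta wn0 by (intro mult_right_mono) auto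
  also have "\<dots> \<le> beta * wn (phik \<phi> lam sel ep k h s a)"
  proof (intro mult_left_mono)
    show "wn v \<le> wn (phik \<phi> lam sel ep k h s a)"
      unfolding wn_def v_def phik_def tV_def L_def using sel_max V by blast
    show "0 \<le> beta" using beta W(2) by linarith
  qed
  also have "\<dots> = bonus \<phi> lam beta sel ep k h s a" unfolding bonus_def wn_def L_def ..
  finally show ?thesis unfolding v_def .
qed


lemma Max_range_mono:
  fixes f g :: "'a::finite \<Rightarrow> real"
  assumes "\<And>a. f a \<le> g a"
  shows "Max (range f) \<le> Max (range g)"
proof -
  have "Max (range f) \<in> range f" by (intro Max_in) auto
  then obtain a where "Max (range f) = f a" by (metis imageE)
  also have "\<dots> \<le> g a" by (rule assms)
  also have "\<dots> \<le> Max (range g)" by (intro Max_ge) auto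
  finally show ?thesis .
qed

lemma optimism_aux:
  fixes \<phi> :: "'s::finite \<Rightarrow> 'a::finite \<Rightarrow> 's \<Rightarrow> real^'d::finite"
  assumes mix: "\<forall>h\<in>{1..H}. \<forall>s a s'. pmf (P h s a) s' = \<theta> h \<bullet> \<phi> s a s'"
    and conf: "\<forall>h\<in>{1..H}. \<forall>s a V. V \<in> Vset H \<longrightarrow>
        \<bar>thetahat \<phi> lam sel ep k h \<bullet> phiV \<phi> s a V - \<theta> h \<bullet> phiV \<phi> s a V\<bar> \<le> bonus \<phi> lam beta sel ep k h s a"
  shows "h + n = H + 1 \<Longrightarrow> 1 \<le> h \<Longrightarrow>
     0 \<le> VsA P H (Rk \<phi> lam beta sel ep k) n h s \<and>
     VsA P H (Rk \<phi> lam beta sel ep k) n h s \<le> VA \<phi> H lam beta sel ep k n h s \<and>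
     VA \<phi> H lam beta sel ep k n h s \<le> real H"
proof (induction n arbitrary: h s)
  case 0 then show ?case by simp
next
  case (Suc n)
  have hH: "h \<in> {1..H}" using Suc.prems by auto
  define Vn where "Vn = VA \<phi> H lam beta sel ep k n (Suc h)"
  define Vs where "Vs = VsA P H (Rk \<phi> lam beta sel ep k) n (Suc h)"
  have IH: "0 \<le> Vs s' \<and> Vs s' \<le> Vn s' \<and> Vn s' \<le> real H" for s'
    unfolding Vs_def Vn_def using Suc.IH[of "Suc h" s'] Suc.prems by simp
  have VnV: "Vn \<in> Vset H" unfolding Vset_def
  proof (intro CollectI allI conjI)
    fix x show "0 \<le> Vn x" using IH[of x] by linarith
    show "Vn x \<le> real H" using IH[of x] by linarith
  qed
  have mixh: "\<forall>s a s'. pmf (P h s a) s' = \<theta> h \<bullet> \<phi> s a s'" using mix hH by blast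
  have bon0: "0 \<le> bonus \<phi> lam beta sel ep k h s a" for s a
  proof -
    have "(\<lambda>_. 0) \<in> Vset H" by (simp add: Vset_def)
    then have "\<bar>thetahat \<phi> lam sel ep k h \<bullet> phiV \<phi> s a (\<lambda>_. 0) - \<theta> h \<bullet> phiV \<phi> s a (\<lambda>_. 0)\<bar> \<le> bonus \<phi> lam beta sel ep k h s a"
      using conf hH by blast
    then show ?thesis by simp
  qed
  let ?fs = "\<lambda>a. min (Rk \<phi> lam beta sel ep k h s a + (\<Sum>s'\<in>UNIV. pmf (P h s a) s' * Vs s')) (real H)"
  let ?fa = "\<lambda>a. min (thetahat \<phi> lam sel ep k h \<bullet> phiV \<phi> s a Vn
                           + Rk \<phi> lam beta sel ep k h s a + bonus \<phi> lam beta sel ep k h s a) (real H)"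
  have VsA_eq: "VsA P H (Rk \<phi> lam beta sel ep k) (Suc n) h s = Max (range ?fs)"
    by (simp add: Vs_def)
  have VA_eq: "VA \<phi> H lam beta sel ep k (Suc n) h s = Max (range ?fa)"
    by (simp add: Vn_def)
  have le: "?fs a \<le> ?fa a" for a
  proof -
    have "(\<Sum>s'\<in>UNIV. pmf (P h s a) s' * Vs s') \<le> (\<Sum>s'\<in>UNIV. pmf (P h s a) s' * Vn s')"
      using IH by (intro sum_mono mult_left_mono) auto
    also have "\<dots> = \<theta> h \<bullet> phiV \<phi> s a Vn" by (rule mixture_inner[OF mixh, symmetric])
    also have "\<dots> \<le> thetahat \<phi> lam sel ep k h \<bullet> phiV \<phi> s a Vn + bonus \<phi> lam beta sel ep k h s a"
    proof -
      have "\<bar>thetahat \<phi> lam sel ep k h \<bullet> phiV \<phi> s a Vn - \<theta> h \<bullet> phiV \<phi> s a Vn\<bar> \<le> bonus \<phi> lam beta sel ep k h s a"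
        using conf hH VnV by blast
      then show ?thesis by linarith
    qed
    finally show ?thesis by (simp add: min_def)
  qed
  have fs0: "0 \<le> ?fs a" for a
  proof -
    have "0 \<le> (\<Sum>s'\<in>UNIV. pmf (P h s a) s' * Vs s')" using IH by (intro sum_nonneg) auto
    moreover have "0 \<le> Rk \<phi> lam beta sel ep k h s a" using bon0 by (simp add: Rk_def)
    ultimately show ?thesis by simp
  qed
  have "0 \<le> ?fs undefined" by (rule fs0)
  also have "\<dots> \<le> Max (range ?fs)" by (intro Max_ge) auto
  finally have A: "0 \<le> Max (range ?fs)" .
  have B: "Max (range ?fs) \<le> Max (range ?fa)" by (rule Max_range_mono) (rule le)
  have C: "Max (range ?fa) \<le> real H" by (subst Max_le_iff) auto
  show ?case unfolding VsA_eq VA_eq using A B C by simp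
qed

lemma optimism:
  fixes \<phi> :: "'s::finite \<Rightarrow> 'a::finite \<Rightarrow> 's \<Rightarrow> real^'d::finite"
  assumes mix: "\<forall>h\<in>{1..H}. \<forall>s a s'. pmf (P h s a) s' = \<theta> h \<bullet> \<phi> s a s'"
    and conf: "\<forall>h\<in>{1..H}. \<forall>s a V. V \<in> Vset H \<longrightarrow>
        \<bar>thetahat \<phi> lam sel ep k h \<bullet> phiV \<phi> s a V - \<theta> h \<bullet> phiV \<phi> s a V\<bar> \<le> bonus \<phi> lam beta sel ep k h s a"
    and h: "h \<in> {1..H}"
  shows "Vstar P H (Rk \<phi> lam beta sel ep k) h s \<le> Valg \<phi> H lam beta sel ep k h s"
  using optimism_aux[OF mix conf, of h "H + 1 - h" s] h unfolding Vstar_def Valg_def by auto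


lemma half_le_ln2: "1/2 \<le> ln (2::real)"
proof -
  have "exp (1/2::real) * exp (1/2) = exp 1" by (simp add: mult_exp_exp)
  also have "\<dots> \<le> 3" by (rule exp_le)
  finally have "exp (1/2::real) * exp (1/2) < 2 * 2" by simp
  then have "exp (1/2::real) < 2"
  proof (rule contrapos_pp)
    assume "\<not> exp (1/2::real) < 2"
    then have "2 \<le> exp (1/2::real)" by simp
    then have "2 * 2 \<le> exp (1/2::real) * exp (1/2)" by (intro mult_mono) auto
    then show "\<not> exp (1/2::real) * exp (1/2) < 2 * 2" by simp
  qed
  then have "ln (exp (1/2::real)) \<le> ln 2" by (subst ln_le_cancel_iff) auto
  then show ?thesis by simp
qed

lemma num_J:
  fixes B lam :: real and H K :: nat
  assumes B: "1 \<le> B" and H: "1 \<le> H" and K: "1 \<le> K" and lamB: "lam * B\<^sup>2 = 1" and lam: "lam > 0"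
  defines "eps \<equiv> 4 / (real H * sqrt (lam + real K * (real H)\<^sup>2))"
      and "J \<equiv> \<lceil>sqrt (real K * (1 + real K * (real H)\<^sup>2 * B\<^sup>2))\<rceil>"
  shows "eps > 0" "4 * B * sqrt (real K) / real H \<le> real_of_int J * eps"
    "(real H)\<^sup>2 / 8 * (lam + real K * (real H)\<^sup>2) * (eps / 2)\<^sup>2 \<le> 1 / 2"
    "real_of_int J \<le> 2 * real K * real H * B + 1" "0 \<le> J"
proof -
  define Z where "Z = lam + real K * (real H)\<^sup>2"
  have Zp: "Z > 0" unfolding Z_def using lam by (simp add: add_pos_nonneg)
  have Hp: "real H > 0" using H by simp
  show ep: "eps > 0" unfolding eps_def using Zp Hp by (simp add: Z_def)
  have eq: "real K * (1 + real K * (real H)\<^sup>2 * B\<^sup>2) = (B * sqrt (real K))\<^sup>2 * Z"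
    unfolding Z_def using lamB by (simp add: power_mult_distrib algebra_simps)
  have sq: "sqrt (real K * (1 + real K * (real H)\<^sup>2 * B\<^sup>2)) = B * sqrt (real K) * sqrt Z"
    unfolding eq using B by (simp add: real_sqrt_mult)
  have "4 * B * sqrt (real K) / real H = sqrt (real K * (1 + real K * (real H)\<^sup>2 * B\<^sup>2)) * eps"
    unfolding sq eps_def Z_def[symmetric] using Zp Hp by (simp add: field_simps)
  also have "\<dots> \<le> real_of_int J * eps"
    unfolding J_def using ep by (intro mult_right_mono) auto
  finally show "4 * B * sqrt (real K) / real H \<le> real_of_int J * eps" .
  have "(eps / 2)\<^sup>2 = 4 / ((real H)\<^sup>2 * Z)"
    unfolding eps_def Z_def[symmetric] using Zp Hp by (simp add: power2_eq_square field_simps)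
  then show "(real H)\<^sup>2 / 8 * (lam + real K * (real H)\<^sup>2) * (eps / 2)\<^sup>2 \<le> 1 / 2"
    unfolding Z_def[symmetric] using Zp Hp by (simp add: field_simps)
  have "real K * (1 + real K * (real H)\<^sup>2 * B\<^sup>2) \<le> (2 * real K * real H * B)\<^sup>2"
  proof -
    have k1: "1 \<le> real K" using K by simp
    have h1: "1 \<le> (real H)\<^sup>2" using H by simp
    have b1: "1 \<le> B\<^sup>2" using B by (simp add: one_le_power)
    have "1 * 1 \<le> real K * (real H)\<^sup>2" using k1 h1 by (intro mult_mono) auto
    then have "1 * 1 \<le> real K * (real H)\<^sup>2 * B\<^sup>2" using b1 by (intro mult_mono) auto
    then have "1 \<le> real K * (real H)\<^sup>2 * B\<^sup>2" by simp
    then have "1 + real K * (real H)\<^sup>2 * B\<^sup>2 \<le> 2 * (real K * (real H)\<^sup>2 * B\<^sup>2)" by linarith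
    then have "real K * (1 + real K * (real H)\<^sup>2 * B\<^sup>2) \<le> real K * (2 * (real K * (real H)\<^sup>2 * B\<^sup>2))"
      by (rule mult_left_mono) simp
    also have "\<dots> \<le> (2 * real K * real H * B)\<^sup>2"
    proof -
      have "0 \<le> real K * (2 * (real K * (real H)\<^sup>2 * B\<^sup>2))" by simp
      moreover have "(2 * real K * real H * B)\<^sup>2 = 2 * (real K * (2 * (real K * (real H)\<^sup>2 * B\<^sup>2)))"
        by (simp add: power_mult_distrib power2_eq_square)
      ultimately show ?thesis by linarith
    qed
    finally show ?thesis .
  qed
  then have "sqrt (real K * (1 + real K * (real H)\<^sup>2 * B\<^sup>2)) \<le> sqrt ((2 * real K * real H * B)\<^sup>2)"
    by (rule real_sqrt_le_mono)
  also have "\<dots> = 2 * real K * real H * B" using B by simp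
  finally have s2: "sqrt (real K * (1 + real K * (real H)\<^sup>2 * B\<^sup>2)) \<le> 2 * real K * real H * B" .
  have "real_of_int J < sqrt (real K * (1 + real K * (real H)\<^sup>2 * B\<^sup>2)) + 1"
    unfolding J_def using ceiling_correct[of "sqrt (real K * (1 + real K * (real H)\<^sup>2 * B\<^sup>2))"] by linarith
  then show "real_of_int J \<le> 2 * real K * real H * B + 1" using s2 by linarith
  have "0 \<le> real K * (1 + real K * (real H)\<^sup>2 * B\<^sup>2)" by simp
  then have "0 \<le> sqrt (real K * (1 + real K * (real H)\<^sup>2 * B\<^sup>2))" by simp
  then show "0 \<le> J" unfolding J_def by linarith
qed


lemma num_W:
  fixes B lam \<delta> :: real and H K d :: nat and J :: int
  assumes B: "1 \<le> B" and H: "1 \<le> H" and K: "1 \<le> K" and d: "1 \<le> d" and lamB: "lam * B\<^sup>2 = 1" and lam: "lam > 0"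
    and dl: "0 < \<delta>" "\<delta> < 1" and J0: "0 \<le> J" and J1: "real_of_int J \<le> 2 * real K * real H * B + 1"
  defines "M \<equiv> nat (2 * J + 1)"
  defines "c \<equiv> ln (real H * real K * real M ^ d / \<delta>)"
  defines "Lg \<equiv> ln (4 * real H ^ 3 * real K / (lam * \<delta>))"
  shows "(real H)\<^sup>2 / 2 * (c + real d / 2) \<le> (real H * sqrt (real d * Lg))\<^sup>2"
    and "exp (- c) * (real H * real K * real M ^ d) = \<delta>"
    and "0 \<le> Lg"
proof -
  have Mr: "real M = 2 * real_of_int J + 1" unfolding M_def using J0 by simp
  have M1: "1 \<le> real M" using Mr J0 by simp
  have Hr: "1 \<le> real H" and Kr: "1 \<le> real K" using H K by auto
  have KHB1: "1 \<le> real K * real H * B"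
  proof -
    have "1 * 1 \<le> real K * real H" using Hr Kr by (intro mult_mono) auto
    then have "1 * 1 \<le> real K * real H * B" using B by (intro mult_mono) auto
    then show ?thesis by simp
  qed
  have M7: "real M \<le> 7 * (real K * real H * B)" using Mr J1 KHB1 by linarith
  define X where "X = real H * real K / \<delta>"
  have hk: "1 * 1 \<le> real H * real K" using Hr Kr by (intro mult_mono) auto
  have "real H * real K * \<delta> \<le> real H * real K" using dl hk by (intro mult_right_le_one_le) auto
  then have "real H * real K \<le> real H * real K / \<delta>" using dl by (simp add: le_divide_eq)
  then have X1: "1 \<le> X" unfolding X_def using hk by simp
  have lnX: "0 \<le> ln X" using X1 by simp
  have c_eq: "c = ln X + real d * ln (real M)"
  proof -
    have "real H * real K * real M ^ d / \<delta> = X * real M ^ d" unfolding X_def by simp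
    then have "c = ln (X * real M ^ d)" unfolding c_def by simp
    also have "\<dots> = ln X + ln (real M ^ d)" using X1 M1 by (intro ln_mult_pos) auto
    also have "ln (real M ^ d) = real d * ln (real M)" by (rule ln_realpow)
    finally show ?thesis .
  qed
  define Y where "Y = 4 * real H ^ 3 * real K * B\<^sup>2 / \<delta>"
  have Lg_eq: "Lg = ln Y"
  proof -
    have "1 / lam = B\<^sup>2" using lamB lam by (simp add: field_simps)
    then have "4 * real H ^ 3 * real K / (lam * \<delta>) = Y" unfolding Y_def using lam dl
      by (simp add: field_simps)
    then show ?thesis unfolding Lg_def by simp
  qed
  have Ypos: "Y > 0" unfolding Y_def using dl Hr Kr B by simp
  have key: "2 * X * real M \<le> Y\<^sup>2"
  proof -
    have h4: "1 \<le> real H ^ 4" using Hr by (simp add: one_le_power)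
    have b3: "1 \<le> B ^ 3" using B by (simp add: one_le_power)
    have "1 * 1 \<le> real H ^ 4 * B ^ 3" using h4 b3 by (intro mult_mono) auto
    then have p1: "1 \<le> real H ^ 4 * B ^ 3" by simp
    have "2 * (real H * real K) * real M \<le> 2 * (real H * real K) * (7 * (real K * real H * B))"
      using M7 Hr Kr by (intro mult_left_mono) auto
    also have "\<dots> = 14 * (real H)\<^sup>2 * (real K)\<^sup>2 * B" by (simp add: power2_eq_square)
    also have "\<dots> \<le> 16 * (real H)\<^sup>2 * (real K)\<^sup>2 * B * (real H ^ 4 * B ^ 3)"
    proof -
      have "0 \<le> (real H)\<^sup>2 * (real K)\<^sup>2 * B" using B by simp
      then have "14 * ((real H)\<^sup>2 * (real K)\<^sup>2 * B) \<le> 16 * ((real H)\<^sup>2 * (real K)\<^sup>2 * B) * (real H ^ 4 * B ^ 3)"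
      proof -
        have "14 * ((real H)\<^sup>2 * (real K)\<^sup>2 * B) \<le> 16 * ((real H)\<^sup>2 * (real K)\<^sup>2 * B)"
          using \<open>0 \<le> (real H)\<^sup>2 * (real K)\<^sup>2 * B\<close> by linarith
        also have "\<dots> = 16 * ((real H)\<^sup>2 * (real K)\<^sup>2 * B) * 1" by simp
        also have "\<dots> \<le> 16 * ((real H)\<^sup>2 * (real K)\<^sup>2 * B) * (real H ^ 4 * B ^ 3)"
          using p1 \<open>0 \<le> (real H)\<^sup>2 * (real K)\<^sup>2 * B\<close> by (intro mult_left_mono) auto
        finally show ?thesis .
      qed
      then show ?thesis by (simp add: mult.assoc)
    qed
    also have "\<dots> = 16 * real H ^ 6 * (real K)\<^sup>2 * B ^ 4"
      by (simp add: power2_eq_square power_def algebra_simps numeral_eq_Suc)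
    finally have a: "2 * (real H * real K) * real M \<le> 16 * real H ^ 6 * (real K)\<^sup>2 * B ^ 4" .
    have "2 * X * real M = 2 * (real H * real K) * real M / \<delta>" unfolding X_def by simp
    also have "\<dots> \<le> 16 * real H ^ 6 * (real K)\<^sup>2 * B ^ 4 / \<delta>"
      using a dl by (intro divide_right_mono) auto
    also have "\<dots> \<le> 16 * real H ^ 6 * (real K)\<^sup>2 * B ^ 4 / \<delta>\<^sup>2"
    proof (rule divide_left_mono)
      show "\<delta>\<^sup>2 \<le> \<delta>" using dl by (simp add: power2_eq_square mult_le_cancel_right1 less_imp_le)
      show "0 \<le> 16 * real H ^ 6 * (real K)\<^sup>2 * B ^ 4" using B by simp
      show "0 < \<delta> * \<delta>\<^sup>2" using dl by simp
    qed
    also have "\<dots> = Y\<^sup>2" unfolding Y_def by (simp add: power_divide power_mult_distrib power2_eq_square power_def numeral_eq_Suc algebra_simps)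
    finally show ?thesis .
  qed
  have Xp: "X > 0" using X1 by simp
  have Mp: "real M > 0" using M1 by simp
  have "ln (2 * X * real M) = ln 2 + ln X + ln (real M)"
    using Xp Mp by (simp add: ln_mult)
  then have l2: "ln X + ln (real M) + 1/2 \<le> ln (2 * X * real M)" using half_le_ln2 by simp
  also have "\<dots> \<le> ln (Y\<^sup>2)"
  proof -
    have p: "0 < 2 * X * real M" using Xp Mp by simp
    have q: "0 < Y\<^sup>2" using Ypos by simp
    show ?thesis using key p q by (subst ln_le_cancel_iff) auto
  qed
  also have "\<dots> = 2 * Lg" unfolding Lg_eq using Ypos by (simp add: ln_realpow)
  finally have A: "ln X + ln (real M) + 1/2 \<le> 2 * Lg" .
  have lnM: "0 \<le> ln (real M)" using M1 by simp
  have dr: "1 \<le> real d" using d by simp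
  have "ln X \<le> real d * ln X" using lnX dr by (metis mult_le_cancel_right1 not_le order_less_le_trans zero_less_one)
  then have "c + real d / 2 \<le> real d * (ln X + ln (real M) + 1/2)"
    unfolding c_eq by (simp add: algebra_simps)
  also have "\<dots> \<le> real d * (2 * Lg)" using A dr by (intro mult_left_mono) auto
  finally have C: "c + real d / 2 \<le> real d * (2 * Lg)" .
  have Lg0: "0 \<le> Lg" using A lnX lnM by linarith
  then show "0 \<le> Lg" .
  have "(real H * sqrt (real d * Lg))\<^sup>2 = (real H)\<^sup>2 * (real d * Lg)"
    using Lg0 by (simp add: power_mult_distrib)
  moreover have "(real H)\<^sup>2 / 2 * (c + real d / 2) \<le> (real H)\<^sup>2 / 2 * (real d * (2 * Lg))"
    using C by (intro mult_left_mono) auto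
  ultimately show "(real H)\<^sup>2 / 2 * (c + real d / 2) \<le> (real H * sqrt (real d * Lg))\<^sup>2" by simp
  have pos: "real H * real K * real M ^ d / \<delta> > 0" using Hr Kr Mp dl by simp
  have "exp (- c) = 1 / (real H * real K * real M ^ d / \<delta>)"
    unfolding c_def using pos by (simp add: exp_minus)
  then show "exp (- c) * (real H * real K * real M ^ d) = \<delta>"
    using Hr Kr Mp dl by simp
qed


theorem lemma2:
  fixes \<phi> :: "'s::finite \<Rightarrow> 'a::finite \<Rightarrow> 's \<Rightarrow> real^'d::finite"
    and P :: "nat \<Rightarrow> 's \<Rightarrow> 'a \<Rightarrow> 's pmf"
    and \<theta> :: "nat \<Rightarrow> real^'d"
    and s1 :: 's
    and H K :: nat
    and B \<delta> lam beta :: real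
    and sel :: "nat \<Rightarrow> nat \<Rightarrow> real^'d^'d \<Rightarrow> 's \<Rightarrow> 'a \<Rightarrow> ('s \<Rightarrow> real)"
    and pick :: "nat \<Rightarrow> nat \<Rightarrow> 's \<Rightarrow> ('a \<Rightarrow> real) \<Rightarrow> 'a"
  assumes B_pos: "0 < B"
    and delta: "0 < \<delta>" "\<delta> < 1"
    and mixture: "\<forall>h\<in>{1..H}. \<forall>s a s'. pmf (P h s a) s' = \<theta> h \<bullet> \<phi> s a s'"
    and theta_bd: "\<forall>h\<in>{1..H}. norm (\<theta> h) \<le> B"
    and phi_bd: "\<forall>s a V. (\<forall>x. 0 \<le> V x \<and> V x \<le> 1) \<longrightarrow> norm (phiV \<phi> s a V) \<le> 1"
    and lam_def: "lam = 1 / B\<^sup>2"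
    and beta_def: "beta = real H * sqrt (real CARD('d) * ln (4 * real H ^ 3 * real K / (lam * \<delta>)))
                          + sqrt lam * B"
    and sel_argmax: "\<forall>k h M s a. sel k h M s a \<in> Vset H \<and>
                       (\<forall>V\<in>Vset H. wnorm (matrix_inv M) (phiV \<phi> s a V)
                                   \<le> wnorm (matrix_inv M) (phiV \<phi> s a (sel k h M s a)))"
    and pick_argmax: "\<forall>k h s f a. f a \<le> f (pick k h s f)"
  shows "measure_pmf.prob (histp \<phi> P s1 H lam beta sel pick K)
           {hs. \<forall>k\<in>{1..K}. \<forall>h\<in>{1..H}. \<forall>s.
                  Vstar P H (Rk \<phi> lam beta sel (hist_fn hs) k) h s
                  \<le> Valg \<phi> H lam beta sel (hist_fn hs) k h s}
         \<ge> 1 - \<delta>"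
proof -
  define p where "p = histp \<phi> P s1 H lam beta sel pick K"
  define Good where "Good = {hs. \<forall>k\<in>{1..K}. \<forall>h\<in>{1..H}. \<forall>s.
                  Vstar P H (Rk \<phi> lam beta sel (hist_fn hs) k) h s
                  \<le> Valg \<phi> H lam beta sel (hist_fn hs) k h s}"
  have "measure_pmf.prob p Good \<ge> 1 - \<delta>"
  proof (cases "H = 0 \<or> K = 0")
    case True
    then have "Good = UNIV" by (auto simp: Good_def)
    then show ?thesis using delta by (simp add: measure_pmf.prob_space)
  next
    case False
    then have H1: "1 \<le> H" and K1: "1 \<le> K" by auto
    have selV: "\<forall>k h M s a. sel k h M s a \<in> Vset H" using sel_argmax by blast
    have sel_max: "\<forall>k h M s a. \<forall>V\<in>Vset H. wnorm (matrix_inv M) (phiV \<phi> s a V)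
                                   \<le> wnorm (matrix_inv M) (phiV \<phi> s a (sel k h M s a))"
      using sel_argmax by blast
    have B1: "1 \<le> B"
    proof -
      have mix1: "\<forall>s a s'. pmf (P 1 s a) s' = \<theta> 1 \<bullet> \<phi> s a s'" using mixture H1 by auto
      have "1 = (\<Sum>s'\<in>UNIV. pmf (P 1 s1 undefined) s' * 1)" by (simp add: sum_pmf_eq_1)
      also have "\<dots> = \<theta> 1 \<bullet> phiV \<phi> s1 undefined (\<lambda>_. 1)" by (rule mixture_inner[OF mix1, symmetric])
      also have "\<dots> \<le> norm (\<theta> 1) * norm (phiV \<phi> s1 undefined (\<lambda>_. 1))" by (rule norm_cauchy_schwarz)
      also have "\<dots> \<le> B * 1" using theta_bd phi_bd H1 B_pos by (intro mult_mono) auto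
      finally show ?thesis by simp
    qed
    have lamB: "lam * B\<^sup>2 = 1" using lam_def B_pos by simp
    have lam0: "lam > 0" using lam_def B_pos by simp
    define eps where "eps = 4 / (real H * sqrt (lam + real K * (real H)\<^sup>2))"
    define J where "J = \<lceil>sqrt (real K * (1 + real K * (real H)\<^sup>2 * B\<^sup>2))\<rceil>"
    have nJ: "eps > 0" "4 * B * sqrt (real K) / real H \<le> real_of_int J * eps"
      "(real H)\<^sup>2 / 8 * (lam + real K * (real H)\<^sup>2) * (eps / 2)\<^sup>2 \<le> 1 / 2"
      "real_of_int J \<le> 2 * real K * real H * B + 1" "0 \<le> J"
      unfolding eps_def J_def by (rule num_J[OF B1 H1 K1 lamB lam0])+
    define d where "d = CARD('d)"
    have d1: "1 \<le> d" unfolding d_def by (simp add: Suc_le_eq)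
    define M where "M = nat (2 * J + 1)"
    define c where "c = ln (real H * real K * real M ^ d / \<delta>)"
    define Lg where "Lg = ln (4 * real H ^ 3 * real K / (lam * \<delta>))"
    define W where "W = real H * sqrt (real d * Lg)"
    have nW: "(real H)\<^sup>2 / 2 * (c + real d / 2) \<le> W\<^sup>2"
       "exp (- c) * (real H * real K * real M ^ d) = \<delta>" "0 \<le> Lg"
      unfolding W_def c_def Lg_def M_def by (rule num_W[OF B1 H1 K1 d1 lamB lam0 delta nJ(5) nJ(4)])+
    have W0: "0 \<le> W" unfolding W_def using nW(3) by simp
    have beta_eq: "beta = W + 1"
    proof -
      have "sqrt lam * B = 1" using lam_def B_pos by (simp add: real_sqrt_divide)
      then show ?thesis unfolding beta_def W_def Lg_def d_def by simp
    qed
    define N where "N = (grid eps J :: (real^'d) set)"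
    define I where "I = {1..H} \<times> {1..K} \<times> N"
    define A where "A = (\<lambda>(h, k, x). {hs. c \<le> Zs \<phi> lam sel \<theta> (real H) x (hist_fn hs) h k})"
    have finI: "finite I" unfolding I_def N_def using grid_finite by auto
    have "measure_pmf.prob p Good \<ge> 1 - real (card I) * exp (- c)"
    proof (rule union_bound_good[OF finI])
      fix i assume "i \<in> I"
      then obtain h k x where i: "i = (h, k, x)" and h: "h \<in> {1..H}" and k: "k \<in> {1..K}"
        unfolding I_def by auto
      have mixh: "\<forall>s a s'. pmf (P h s a) s' = \<theta> h \<bullet> \<phi> s a s'" using mixture h by blast
      have "(\<integral>\<^sup>+hs. ennreal (exp (Zs \<phi> lam sel \<theta> (real H) x (hist_fn hs) h k)) \<partial>measure_pmf p) \<le> 1"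
        unfolding p_def using h k by (intro exp_Zs[where P=P and h=h and \<theta>=\<theta>, OF mixh selV]) auto
      then have "measure_pmf.prob p {hs. c \<le> Zs \<phi> lam sel \<theta> (real H) x (hist_fn hs) h k} \<le> exp (- c)"
        by (rule markov_exp)
      then show "measure_pmf.prob p (A i) \<le> exp (- c)" unfolding A_def i by simp
    next
      fix hs assume nb: "\<forall>i\<in>I. hs \<notin> A i"
      show "hs \<in> Good" unfolding Good_def
      proof (intro CollectI ballI allI)
        fix k h s assume k: "k \<in> {1..K}" and h: "h \<in> {1..H}"
        have conf: "\<forall>h\<in>{1..H}. \<forall>s a V. V \<in> Vset H \<longrightarrow>
            \<bar>thetahat \<phi> lam sel (hist_fn hs) k h \<bullet> phiV \<phi> s a V - \<theta> h \<bullet> phiV \<phi> s a V\<bar>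
              \<le> bonus \<phi> lam beta sel (hist_fn hs) k h s a"
        proof (intro ballI allI impI)
          fix h' s a and V :: "'s \<Rightarrow> real" assume h': "h' \<in> {1..H}" and V: "V \<in> Vset H"
          have mixh: "\<forall>s a s'. pmf (P h' s a) s' = \<theta> h' \<bullet> \<phi> s a s'" using mixture h' by blast
          have th: "norm (\<theta> h') \<le> B" using theta_bd h' by blast
          have good: "\<forall>x\<in>grid eps J. Zs \<phi> lam sel \<theta> (real H) x (hist_fn hs) h' k < c"
          proof
            fix x :: "real^'d" assume "x \<in> grid eps J"
            then have "(h', k, x) \<in> I" unfolding I_def N_def using h' k by auto
            then have "hs \<notin> A (h', k, x)" using nb by blast
            then show "Zs \<phi> lam sel \<theta> (real H) x (hist_fn hs) h' k < c" unfolding A_def by auto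
          qed
          have Hp: "H > 0" using H1 by simp
          have k1: "1 \<le> k" "k \<le> K" using k by auto
          have Wc: "(real H)\<^sup>2 / 2 * (c + real CARD('d) / 2) \<le> W\<^sup>2" using nW(1) unfolding d_def .
          show "\<bar>thetahat \<phi> lam sel (hist_fn hs) k h' \<bullet> phiV \<phi> s a V - \<theta> h' \<bullet> phiV \<phi> s a V\<bar>
              \<le> bonus \<phi> lam beta sel (hist_fn hs) k h' s a"
            by (rule confidence[where P=P and h=h' and \<theta>=\<theta>, OF mixh selV sel_max phi_bd th lamB lam0 Hp k1 nJ(1) nJ(2) nJ(3) good Wc W0 _ V])
               (simp add: beta_eq)
        qed
        show "Vstar P H (Rk \<phi> lam beta sel (hist_fn hs) k) h s \<le> Valg \<phi> H lam beta sel (hist_fn hs) k h s"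
          by (rule optimism[OF mixture conf h])
      qed
    qed
    moreover have "real (card I) \<le> real H * real K * real M ^ d"
    proof -
      have "card I = H * (K * card N)" unfolding I_def by (simp add: card_cartesian_product)
      moreover have "card N \<le> M ^ d" unfolding N_def M_def d_def by (rule grid_card)
      ultimately have "card I \<le> H * (K * M ^ d)" by simp
      then have "real (card I) \<le> real (H * (K * M ^ d))" by (simp only: of_nat_le_iff)
      then show ?thesis by simp
    qed
    ultimately have "measure_pmf.prob p Good \<ge> 1 - real H * real K * real M ^ d * exp (- c)"
      by (smt (verit) exp_gt_zero mult_right_mono)
    then show ?thesis using nW(2) by (simp add: mult.commute)
  qed
  then show ?thesis unfolding p_def Good_def .
qed


end
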